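(* Let $-\infty<a<b<\infty$, let $f:[a,b]\times\mathbb{R}\times\mathbb{R}\to\mathbb{R}$, $(x,u,p)\mapsto f(x,u,p)$, be of class $C^3$, and let $\Phi(u)=\int_a^b f(x,u(x),u'(x))\,dx$ on $C^1([a,b])$. Let $u^0\in C^1([a,b])$ be an extremal (i.e. $\frac{d}{dx}f^0_p=f^0_u$ on $[a,b]$) satisfying $f^0_p(a)=f^0_p(b)=0$, and assume there is $c^0>0$ with $f^0_{pp}(x)\ge c^0$ for all $x\in[a,b]$. Let $h$ be a nontrivial solution of the Jacobi equation $\mathcal{A}h=0$ on $[a,b]$ with $\mathcal{B}h(a)=0$. (i) If $h(y)=0$ for some $y\in(a,b]$, or if $\mathcal{B}h(b)\,h(b)<0$, then $u^0$ is not a weak minimizer of $\Phi$ in $C^1([a,b])$. (ii) If $h(y)\neq0$ for all $y\in(a,b]$ and $\mathcal{B}h(b)\,h(b)>0$, then $u^0$ is a strict weak minimizer of $\Phi$ in $C^1([a,b])$.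
   Context: For a partial derivative $\mathfrak{f}$ of $f$ (e.g. $f_p,f_u,f_{pp},f_{pu},f_{up},f_{uu}$) write $\mathfrak{f}^0(x)=\mathfrak{f}(x,u^0(x),(u^0)'(x))$. For $h\in C^2([a,b])$ define $\mathcal{B}h=f^0_{pp}h'+f^0_{pu}h$, $\mathcal{C}h=f^0_{up}h'+f^0_{uu}h$ and $\mathcal{A}h=-\frac{d}{dx}(\mathcal{B}h)+\mathcal{C}h$; the Jacobi equation is $\mathcal{A}h=0$. No endpoint constraints are imposed. $u^0$ is a weak minimizer in $C^1([a,b])$ if there is $\varepsilon>0$ with $\Phi(v)\ge\Phi(u^0)$ for all $v\in C^1([a,b])$ with $\|v-u^0\|_{C^1}<\varepsilon$ (where $\|v\|_{C^1}=\max|v|+\max|v'|$); strict if $\Phi(v)>\Phi(u^0)$ for such $v\ne u^0$. *)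

theory Defs
  imports "HOL-Analysis.Analysis"
begin

definition D1 :: "(real \<Rightarrow> real \<Rightarrow> real \<Rightarrow> real) \<Rightarrow> real \<Rightarrow> real \<Rightarrow> real \<Rightarrow> real" where
  "D1 g = (\<lambda>x u p. deriv (\<lambda>t. g t u p) x)"
definition D2 :: "(real \<Rightarrow> real \<Rightarrow> real \<Rightarrow> real) \<Rightarrow> real \<Rightarrow> real \<Rightarrow> real \<Rightarrow> real" where
  "D2 g = (\<lambda>x u p. deriv (\<lambda>t. g x t p) u)"
definition D3 :: "(real \<Rightarrow> real \<Rightarrow> real \<Rightarrow> real) \<Rightarrow> real \<Rightarrow> real \<Rightarrow> real \<Rightarrow> real" where
  "D3 g = (\<lambda>x u p. deriv (\<lambda>t. g x u t) p)"

fun Ck_on :: "nat \<Rightarrow> (real \<times> real \<times> real) set \<Rightarrow> (real \<Rightarrow> real \<Rightarrow> real \<Rightarrow> real) \<Rightarrow> bool" where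
  "Ck_on 0 U g = continuous_on U (\<lambda>(x,u,p). g x u p)"
| "Ck_on (Suc k) U g =
     (continuous_on U (\<lambda>(x,u,p). g x u p) \<and>
      (\<forall>(x,u,p)\<in>U. (\<lambda>t. g t u p) differentiable (at x) \<and>
                    (\<lambda>t. g x t p) differentiable (at u) \<and>
                    (\<lambda>t. g x u t) differentiable (at p)) \<and>
      Ck_on k U (D1 g) \<and> Ck_on k U (D2 g) \<and> Ck_on k U (D3 g))"

text \<open>f is C^3 on [a,b] x R x R: C^3 on some open neighbourhood of that set.\<close>

definition C3_strip :: "real \<Rightarrow> real \<Rightarrow> (real \<Rightarrow> real \<Rightarrow> real \<Rightarrow> real) \<Rightarrow> bool" where
  "C3_strip a b f = (\<exists>U. open U \<and> {a..b} \<times> UNIV \<times> UNIV \<subseteq> U \<and> Ck_on 3 U f)"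

text \<open>Derivative on [a,b] (one-sided at the endpoints).\<close>

definition dv :: "real \<Rightarrow> real \<Rightarrow> (real \<Rightarrow> real) \<Rightarrow> real \<Rightarrow> real" where
  "dv a b v x = vector_derivative v (at x within {a..b})"

definition C1_on :: "real \<Rightarrow> real \<Rightarrow> (real \<Rightarrow> real) \<Rightarrow> bool" where
  "C1_on a b v = ((\<forall>x\<in>{a..b}. v differentiable (at x within {a..b})) \<and>
                  continuous_on {a..b} (dv a b v))"

definition C2_on :: "real \<Rightarrow> real \<Rightarrow> (real \<Rightarrow> real) \<Rightarrow> bool" where
  "C2_on a b v = (C1_on a b v \<and> C1_on a b (dv a b v))"

definition C1_norm :: "real \<Rightarrow> real \<Rightarrow> (real \<Rightarrow> real) \<Rightarrow> real" where
  "C1_norm a b w = (SUP x\<in>{a..b}. \<bar>w x\<bar>) + (SUP x\<in>{a..b}. \<bar>dv a b w x\<bar>)"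

definition Phi :: "real \<Rightarrow> real \<Rightarrow> (real \<Rightarrow> real \<Rightarrow> real \<Rightarrow> real) \<Rightarrow> (real \<Rightarrow> real) \<Rightarrow> real" where
  "Phi a b f v = integral {a..b} (\<lambda>x. f x (v x) (dv a b v x))"

text \<open>Composition along u0: \<frak>f^0(x) = \<frak>f(x, u0 x, u0' x).\<close>

definition along :: "real \<Rightarrow> real \<Rightarrow> (real \<Rightarrow> real \<Rightarrow> real \<Rightarrow> real) \<Rightarrow> (real \<Rightarrow> real) \<Rightarrow> real \<Rightarrow> real" where
  "along a b g u0 x = g x (u0 x) (dv a b u0 x)"

text \<open>Operators B h and C h (f_pu = (f_p)_u, f_up = (f_u)_p).\<close>

definition Bop :: "real \<Rightarrow> real \<Rightarrow> (real \<Rightarrow> real \<Rightarrow> real \<Rightarrow> real) \<Rightarrow> (real \<Rightarrow> real) \<Rightarrow> (real \<Rightarrow> real) \<Rightarrow> real \<Rightarrow> real" where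
  "Bop a b f u0 h x = along a b (D3 (D3 f)) u0 x * dv a b h x + along a b (D2 (D3 f)) u0 x * h x"

definition Cop :: "real \<Rightarrow> real \<Rightarrow> (real \<Rightarrow> real \<Rightarrow> real \<Rightarrow> real) \<Rightarrow> (real \<Rightarrow> real) \<Rightarrow> (real \<Rightarrow> real) \<Rightarrow> real \<Rightarrow> real" where
  "Cop a b f u0 h x = along a b (D3 (D2 f)) u0 x * dv a b h x + along a b (D2 (D2 f)) u0 x * h x"

text \<open>h \<in> C^2([a,b]) solves the Jacobi equation A h = -(B h)' + C h = 0 on [a,b].\<close>

definition jacobi_solution :: "real \<Rightarrow> real \<Rightarrow> (real \<Rightarrow> real \<Rightarrow> real \<Rightarrow> real) \<Rightarrow> (real \<Rightarrow> real) \<Rightarrow> (real \<Rightarrow> real) \<Rightarrow> bool" where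
  "jacobi_solution a b f u0 h =
     (C2_on a b h \<and>
      (\<forall>x\<in>{a..b}. (Bop a b f u0 h has_real_derivative Cop a b f u0 h x) (at x within {a..b})))"

definition weak_minimizer :: "real \<Rightarrow> real \<Rightarrow> (real \<Rightarrow> real \<Rightarrow> real \<Rightarrow> real) \<Rightarrow> (real \<Rightarrow> real) \<Rightarrow> bool" where
  "weak_minimizer a b f u0 = (\<exists>\<epsilon>>0. \<forall>v. C1_on a b v \<and> C1_norm a b (\<lambda>x. v x - u0 x) < \<epsilon>
        \<longrightarrow> Phi a b f v \<ge> Phi a b f u0)"

definition strict_weak_minimizer :: "real \<Rightarrow> real \<Rightarrow> (real \<Rightarrow> real \<Rightarrow> real \<Rightarrow> real) \<Rightarrow> (real \<Rightarrow> real) \<Rightarrow> bool" where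
  "strict_weak_minimizer a b f u0 = (\<exists>\<epsilon>>0. \<forall>v. C1_on a b v \<and> C1_norm a b (\<lambda>x. v x - u0 x) < \<epsilon>
        \<and> (\<exists>x\<in>{a..b}. v x \<noteq> u0 x) \<longrightarrow> Phi a b f v > Phi a b f u0)"

end

theory Submission
  imports Defs
begin

lemma dv_eq:
  assumes "a < b" "x \<in> {a..b}" "(v has_real_derivative D) (at x within {a..b})"
  shows "dv a b v x = D"
  using assms unfolding dv_def has_real_derivative_iff_has_vector_derivative
  by (simp add: vector_derivative_within_closed_interval)

lemma C1_deriv:
  assumes "C1_on a b v" "x \<in> {a..b}"
  shows "(v has_real_derivative dv a b v x) (at x within {a..b})"
  using assms unfolding C1_on_def dv_def has_real_derivative_iff_has_vector_derivative
  by (simp add: vector_derivative_works)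

lemma C1_dv_cont: "C1_on a b v \<Longrightarrow> continuous_on {a..b} (dv a b v)"
  by (simp add: C1_on_def)

lemma C1_cont:
  assumes "C1_on a b v" shows "continuous_on {a..b} v"
  using assms unfolding C1_on_def continuous_on_eq_continuous_within
  using differentiable_imp_continuous_within by blast

lemma C1I:
  assumes "a < b" "\<And>x. x \<in> {a..b} \<Longrightarrow> (v has_real_derivative v' x) (at x within {a..b})"
    "continuous_on {a..b} v'"
  shows "C1_on a b v"
proof -
  have "\<forall>x\<in>{a..b}. v differentiable (at x within {a..b})"
    using assms(2) real_differentiable_def by blast
  moreover have "continuous_on {a..b} (dv a b v)"
    using assms(3) by (rule continuous_on_eq) (metis assms(1) assms(2) dv_eq)
  ultimately show ?thesis by (simp add: C1_on_def)
qed

lemma C1I_dv: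
  assumes "a < b" "\<And>x. x \<in> {a..b} \<Longrightarrow> (v has_real_derivative v' x) (at x within {a..b})"
    "continuous_on {a..b} v'"
  shows "C1_on a b v \<and> (\<forall>x\<in>{a..b}. dv a b v x = v' x)"
  using C1I[OF assms] dv_eq[OF assms(1) _ assms(2)] by auto

lemma cont_bound:
  fixes g :: "real \<Rightarrow> real"
  assumes "continuous_on {a..b} g"
  shows "\<exists>M. \<forall>x\<in>{a..b}. \<bar>g x\<bar> \<le> M"
proof -
  have "compact (g ` {a..b})" using assms compact_continuous_image compact_Icc by blast
  then have "bounded (g ` {a..b})" by (rule compact_imp_bounded)
  then show ?thesis unfolding bounded_iff by auto
qed

lemma Ck_cont: "Ck_on k U g \<Longrightarrow> continuous_on U (\<lambda>(x,u,p). g x u p)"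
  by (cases k) auto

lemma Ck_D2:
  assumes "Ck_on (Suc k) U g" "(x,u,p) \<in> U"
  shows "((\<lambda>t. g x t p) has_real_derivative D2 g x u p) (at u)"
proof -
  have "(\<lambda>t. g x t p) differentiable (at u)" using assms by auto
  then show ?thesis unfolding D2_def DERIV_deriv_iff_real_differentiable[symmetric] by simp
qed

lemma Ck_D3:
  assumes "Ck_on (Suc k) U g" "(x,u,p) \<in> U"
  shows "((\<lambda>t. g x u t) has_real_derivative D3 g x u p) (at p)"
proof -
  have "(\<lambda>t. g x u t) differentiable (at p)" using assms by auto
  then show ?thesis unfolding D3_def DERIV_deriv_iff_real_differentiable[symmetric] by simp
qed

lemma Ck_sub2: "Ck_on (Suc k) U g \<Longrightarrow> Ck_on k U (D2 g)" by auto
lemma Ck_sub3: "Ck_on (Suc k) U g \<Longrightarrow> Ck_on k U (D3 g)" by auto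

lemma taylor2:
  fixes F F1 F2 :: "real \<Rightarrow> real"
  assumes "\<And>t. (F has_real_derivative F1 t) (at t)" "\<And>t. (F1 has_real_derivative F2 t) (at t)"
  shows "\<exists>t. \<bar>t\<bar> \<le> \<bar>e\<bar> \<and> F (u + e) = F u + F1 u * e + F2 (u + t) * e\<^sup>2 / 2"
proof -
  define diff where "diff m s = (if m = 0 then F (u + s) else if m = 1 then F1 (u + s) else F2 (u + s))" for m :: nat and s
  have d0: "diff 0 = (\<lambda>s. F (u + s))" by (auto simp: diff_def)
  have "\<forall>m t. m < 2 \<and> \<bar>t\<bar> \<le> \<bar>e\<bar> \<longrightarrow> DERIV (diff m) t :> diff (Suc m) t"
  proof (intro allI impI)
    fix m :: nat and t :: real assume "m < 2 \<and> \<bar>t\<bar> \<le> \<bar>e\<bar>"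
    then have "m = 0 \<or> m = 1" by auto
    then show "DERIV (diff m) t :> diff (Suc m) t"
    proof
      assume "m = 0"
      have "((\<lambda>s. u + s) has_real_derivative 1) (at t)" by (auto intro!: derivative_eq_intros)
      from DERIV_chain2[OF assms(1)[of "u+t"] this] \<open>m=0\<close> show ?thesis unfolding diff_def by simp
    next
      assume "m = 1"
      have "((\<lambda>s. u + s) has_real_derivative 1) (at t)" by (auto intro!: derivative_eq_intros)
      from DERIV_chain2[OF assms(2)[of "u+t"] this] \<open>m=1\<close> show ?thesis unfolding diff_def by simp
    qed
  qed
  from Maclaurin_bi_le[OF d0 this] obtain t where t: "\<bar>t\<bar> \<le> \<bar>e\<bar>"
    "F (u + e) = (\<Sum>m<2. diff m 0 / fact m * e ^ m) + diff 2 t / fact 2 * e ^ 2" by blast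
  have "(\<Sum>m<2::nat. diff m 0 / fact m * e ^ m) = F u + F1 u * e"
    by (simp add: diff_def numeral_2_eq_2)
  with t show ?thesis by (intro exI[of _ t]) (auto simp: diff_def)
qed

lemma mvt1:
  fixes F F1 :: "real \<Rightarrow> real"
  assumes "\<And>t. (F has_real_derivative F1 t) (at t)"
  shows "\<exists>t. \<bar>t\<bar> \<le> \<bar>e\<bar> \<and> F (u + e) = F u + F1 (u + t) * e"
proof -
  define diff where "diff m s = (if m = 0 then F (u + s) else F1 (u + s))" for m :: nat and s
  have d0: "diff 0 = (\<lambda>s. F (u + s))" by (auto simp: diff_def)
  have "\<forall>m t. m < 1 \<and> \<bar>t\<bar> \<le> \<bar>e\<bar> \<longrightarrow> DERIV (diff m) t :> diff (Suc m) t"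
  proof (intro allI impI)
    fix m :: nat and t :: real assume "m < 1 \<and> \<bar>t\<bar> \<le> \<bar>e\<bar>"
    have "((\<lambda>s. u + s) has_real_derivative 1) (at t)" by (auto intro!: derivative_eq_intros)
    from DERIV_chain2[OF assms(1)[of "u+t"] this] \<open>m < 1 \<and> _\<close> show "DERIV (diff m) t :> diff (Suc m) t" unfolding diff_def by simp
  qed
  from Maclaurin_bi_le[OF d0 this] obtain t where t: "\<bar>t\<bar> \<le> \<bar>e\<bar>"
    "F (u + e) = (\<Sum>m<1. diff m 0 / fact m * e ^ m) + diff 1 t / fact 1 * e ^ 1" by blast
  then show ?thesis by (intro exI[of _ t]) (auto simp: diff_def)
qed

lemma quad_err:
  fixes e z \<alpha> \<beta> \<gamma> \<epsilon> :: real
  assumes "\<bar>\<alpha>\<bar> \<le> \<epsilon>" "\<bar>\<beta>\<bar> \<le> \<epsilon>" "\<bar>\<gamma>\<bar> \<le> \<epsilon>"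
  shows "\<bar>\<alpha> * e\<^sup>2 / 2 + \<gamma> * e * z + \<beta> * z\<^sup>2 / 2\<bar> \<le> \<epsilon> * (e\<^sup>2 + z\<^sup>2)"
proof -
  have 1: "\<bar>\<alpha> * e\<^sup>2 / 2\<bar> \<le> \<epsilon> * e\<^sup>2 / 2"
    using assms(1) by (simp add: abs_mult mult_right_mono)
  have 2: "\<bar>\<beta> * z\<^sup>2 / 2\<bar> \<le> \<epsilon> * z\<^sup>2 / 2"
    using assms(2) by (simp add: abs_mult mult_right_mono)
  have "\<bar>\<gamma> * e * z\<bar> = \<bar>\<gamma>\<bar> * (\<bar>e\<bar> * \<bar>z\<bar>)" by (simp add: abs_mult)
  also have "\<dots> \<le> \<epsilon> * (\<bar>e\<bar> * \<bar>z\<bar>)" using assms(3) by (simp add: mult_right_mono)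
  also have "\<dots> \<le> \<epsilon> * ((e\<^sup>2 + z\<^sup>2)/2)"
  proof (rule mult_left_mono)
    have "0 \<le> (\<bar>e\<bar> - \<bar>z\<bar>)\<^sup>2" by simp
    then show "\<bar>e\<bar> * \<bar>z\<bar> \<le> (e\<^sup>2 + z\<^sup>2) / 2" by (simp add: power2_eq_square algebra_simps)
    show "0 \<le> \<epsilon>" using assms(1) by simp
  qed
  finally have 3: "\<bar>\<gamma> * e * z\<bar> \<le> \<epsilon> * ((e\<^sup>2 + z\<^sup>2)/2)" .
  have "\<bar>\<alpha> * e\<^sup>2 / 2 + \<gamma> * e * z + \<beta> * z\<^sup>2 / 2\<bar> \<le> \<bar>\<alpha> * e\<^sup>2 / 2\<bar> + \<bar>\<gamma> * e * z\<bar> + \<bar>\<beta> * z\<^sup>2 / 2\<bar>"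
    by linarith
  also have "\<dots> \<le> \<epsilon> * (e\<^sup>2 + z\<^sup>2)" using 1 2 3 by (simp add: algebra_simps)
  finally show ?thesis .
qed

lemma pt_taylor:
  assumes Ck: "Ck_on 3 U f" and sub: "\<And>u p. (x,u,p) \<in> U"
    and c1: "\<And>s. \<bar>s\<bar> \<le> \<bar>e\<bar> \<Longrightarrow> \<bar>D2 (D2 f) x (u+s) p - D2 (D2 f) x u p\<bar> \<le> \<epsilon>"
    and c2: "\<And>t. \<bar>t\<bar> \<le> \<bar>z\<bar> \<Longrightarrow> \<bar>D3 (D3 f) x (u+e) (p+t) - D3 (D3 f) x u p\<bar> \<le> \<epsilon>"
    and c3: "\<And>s. \<bar>s\<bar> \<le> \<bar>e\<bar> \<Longrightarrow> \<bar>D2 (D3 f) x (u+s) p - D2 (D3 f) x u p\<bar> \<le> \<epsilon>"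
  shows "\<bar>f x (u+e) (p+z) - f x u p - (D2 f x u p * e + D3 f x u p * z)
          - (D2 (D2 f) x u p * e\<^sup>2/2 + D2 (D3 f) x u p * e * z + D3 (D3 f) x u p * z\<^sup>2/2)\<bar> \<le> \<epsilon> * (e\<^sup>2 + z\<^sup>2)"
proof -
  have Ck3: "Ck_on (Suc (Suc (Suc 0))) U f" using Ck by (simp add: numeral_3_eq_3)
  have Ck2: "Ck_on (Suc (Suc 0)) U (D2 f)" "Ck_on (Suc (Suc 0)) U (D3 f)"
    using Ck_sub2[OF Ck3] Ck_sub3[OF Ck3] by auto
  obtain t1 where t1: "\<bar>t1\<bar> \<le> \<bar>e\<bar>" "f x (u+e) p = f x u p + D2 f x u p * e + D2 (D2 f) x (u+t1) p * e\<^sup>2/2"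
    using taylor2[of "\<lambda>t. f x t p" "\<lambda>t. D2 f x t p" "\<lambda>t. D2 (D2 f) x t p" e u]
      Ck_D2[OF Ck3 sub] Ck_D2[OF Ck2(1) sub] by blast
  obtain t2 where t2: "\<bar>t2\<bar> \<le> \<bar>z\<bar>" "f x (u+e) (p+z) = f x (u+e) p + D3 f x (u+e) p * z + D3 (D3 f) x (u+e) (p+t2) * z\<^sup>2/2"
    using taylor2[of "\<lambda>t. f x (u+e) t" "\<lambda>t. D3 f x (u+e) t" "\<lambda>t. D3 (D3 f) x (u+e) t" z p]
      Ck_D3[OF Ck3 sub] Ck_D3[OF Ck2(2) sub] by blast
  obtain t3 where t3: "\<bar>t3\<bar> \<le> \<bar>e\<bar>" "D3 f x (u+e) p = D3 f x u p + D2 (D3 f) x (u+t3) p * e"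
    using mvt1[of "\<lambda>s. D3 f x s p" "\<lambda>s. D2 (D3 f) x s p" e u] Ck_D2[OF Ck2(2) sub] by blast
  have eq: "f x (u+e) (p+z) - f x u p - (D2 f x u p * e + D3 f x u p * z)
          - (D2 (D2 f) x u p * e\<^sup>2/2 + D2 (D3 f) x u p * e * z + D3 (D3 f) x u p * z\<^sup>2/2)
     = (D2 (D2 f) x (u+t1) p - D2 (D2 f) x u p) * e\<^sup>2/2 + (D2 (D3 f) x (u+t3) p - D2 (D3 f) x u p) * e * z
       + (D3 (D3 f) x (u+e) (p+t2) - D3 (D3 f) x u p) * z\<^sup>2/2"
    unfolding t2(2) t3(2) t1(2) by (simp add: field_simps)
  show ?thesis unfolding eq by (rule quad_err) (use c1 c2 c3 t1 t2 t3 in auto)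
qed

lemma schwarz:
  assumes Ck: "Ck_on 3 U f" and U: "open U" and sub: "\<And>u p. (x,u,p) \<in> U"
  shows "D2 (D3 f) x u p = D3 (D2 f) x u p"
proof (rule ccontr)
  assume ne: "D2 (D3 f) x u p \<noteq> D3 (D2 f) x u p"
  define \<epsilon> where "\<epsilon> = \<bar>D2 (D3 f) x u p - D3 (D2 f) x u p\<bar> / 2"
  have e0: "\<epsilon> > 0" using ne by (simp add: \<epsilon>_def)
  have Ck3: "Ck_on (Suc (Suc (Suc 0))) U f" using Ck by (simp add: numeral_3_eq_3)
  have Ck2: "Ck_on (Suc (Suc 0)) U (D2 f)" "Ck_on (Suc (Suc 0)) U (D3 f)"
    using Ck_sub2[OF Ck3] Ck_sub3[OF Ck3] by auto
  have Ck1: "Ck_on (Suc 0) U (D3 (D2 f))" "Ck_on (Suc 0) U (D2 (D3 f))"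
    using Ck_sub3[OF Ck2(1)] Ck_sub2[OF Ck2(2)] by auto
  have cA: "isCont (\<lambda>(x,u,p). D3 (D2 f) x u p) (x,u,p)"
    using Ck_cont[OF Ck1(1)] U sub continuous_on_eq_continuous_at by blast
  have cB: "isCont (\<lambda>(x,u,p). D2 (D3 f) x u p) (x,u,p)"
    using Ck_cont[OF Ck1(2)] U sub continuous_on_eq_continuous_at by blast
  obtain dA where dA: "dA > 0" "\<And>y. dist y (x,u,p) < dA \<Longrightarrow>
      dist ((\<lambda>(x,u,p). D3 (D2 f) x u p) y) (D3 (D2 f) x u p) < \<epsilon>"
    using cA e0 unfolding continuous_at_eps_delta by fastforce
  obtain dB where dB: "dB > 0" "\<And>y. dist y (x,u,p) < dB \<Longrightarrow>
      dist ((\<lambda>(x,u,p). D2 (D3 f) x u p) y) (D2 (D3 f) x u p) < \<epsilon>"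
    using cB e0 unfolding continuous_at_eps_delta by fastforce
  define s where "s = min dA dB / 3"
  have s0: "s > 0" using dA dB by (simp add: s_def)
  have dist_le: "dist (x, u', p') (x, u, p) \<le> \<bar>u' - u\<bar> + \<bar>p' - p\<bar>" for u' p'
  proof -
    have "dist (x, u', p') (x, u, p) = sqrt ((u'-u)\<^sup>2 + (p'-p)\<^sup>2)"
      by (simp add: dist_Pair_Pair dist_real_def)
    also have "\<dots> \<le> sqrt ((\<bar>u'-u\<bar> + \<bar>p'-p\<bar>)\<^sup>2)"
      by (rule real_sqrt_le_mono) (simp add: power2_eq_square algebra_simps abs_mult_self_eq)
    also have "\<dots> = \<bar>u' - u\<bar> + \<bar>p' - p\<bar>" by simp
    finally show ?thesis .
  qed
  have closeA: "\<bar>D3 (D2 f) x u' p' - D3 (D2 f) x u p\<bar> < \<epsilon>" if "\<bar>u'-u\<bar> \<le> s" "\<bar>p'-p\<bar> \<le> s" for u' p'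
  proof -
    have "dist (x,u',p') (x,u,p) < dA" using dist_le[of u' p'] that dA s0 by (simp add: s_def)
    from dA(2)[OF this] show ?thesis by (simp add: dist_real_def)
  qed
  have closeB: "\<bar>D2 (D3 f) x u' p' - D2 (D3 f) x u p\<bar> < \<epsilon>" if "\<bar>u'-u\<bar> \<le> s" "\<bar>p'-p\<bar> \<le> s" for u' p'
  proof -
    have "dist (x,u',p') (x,u,p) < dB" using dist_le[of u' p'] that dB s0 by (simp add: s_def)
    from dB(2)[OF this] show ?thesis by (simp add: dist_real_def)
  qed
  define \<Delta> where "\<Delta> = f x (u+s) (p+s) - f x (u+s) p - f x u (p+s) + f x u p"
  have "\<And>t. ((\<lambda>\<sigma>. f x \<sigma> (p+s) - f x \<sigma> p) has_real_derivative (D2 f x t (p+s) - D2 f x t p)) (at t)"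
    using Ck_D2[OF Ck3 sub] by (auto intro!: derivative_eq_intros)
  from mvt1[OF this, of s u] obtain t1 where t1: "\<bar>t1\<bar> \<le> s"
    "\<Delta> = (D2 f x (u+t1) (p+s) - D2 f x (u+t1) p) * s" using s0 by (auto simp: \<Delta>_def algebra_simps)
  from mvt1[of "\<lambda>\<tau>. D2 f x (u+t1) \<tau>" "\<lambda>\<tau>. D3 (D2 f) x (u+t1) \<tau>" s p] Ck_D3[OF Ck2(1) sub]
  obtain t2 where t2: "\<bar>t2\<bar> \<le> s" "D2 f x (u+t1) (p+s) = D2 f x (u+t1) p + D3 (D2 f) x (u+t1) (p+t2) * s"
    using s0 by auto
  have A: "\<Delta> = D3 (D2 f) x (u+t1) (p+t2) * s * s" using t1 t2 by simp
  have "\<And>t. ((\<lambda>\<tau>. f x (u+s) \<tau> - f x u \<tau>) has_real_derivative (D3 f x (u+s) t - D3 f x u t)) (at t)"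
    using Ck_D3[OF Ck3 sub] by (auto intro!: derivative_eq_intros)
  from mvt1[OF this, of s p] obtain t3 where t3: "\<bar>t3\<bar> \<le> s"
    "\<Delta> = (D3 f x (u+s) (p+t3) - D3 f x u (p+t3)) * s" using s0 by (auto simp: \<Delta>_def algebra_simps)
  from mvt1[of "\<lambda>\<sigma>. D3 f x \<sigma> (p+t3)" "\<lambda>\<sigma>. D2 (D3 f) x \<sigma> (p+t3)" s u] Ck_D2[OF Ck2(2) sub]
  obtain t4 where t4: "\<bar>t4\<bar> \<le> s" "D3 f x (u+s) (p+t3) = D3 f x u (p+t3) + D2 (D3 f) x (u+t4) (p+t3) * s"
    using s0 by auto
  have B: "\<Delta> = D2 (D3 f) x (u+t4) (p+t3) * s * s" using t3 t4 by simp
  have eqAB: "D3 (D2 f) x (u+t1) (p+t2) = D2 (D3 f) x (u+t4) (p+t3)"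
    using A B s0 by simp
  have "\<bar>D3 (D2 f) x (u+t1) (p+t2) - D3 (D2 f) x u p\<bar> < \<epsilon>" using closeA t1 t2 by simp
  moreover have "\<bar>D2 (D3 f) x (u+t4) (p+t3) - D2 (D3 f) x u p\<bar> < \<epsilon>" using closeB t3 t4 by simp
  ultimately have "\<bar>D2 (D3 f) x u p - D3 (D2 f) x u p\<bar> < 2 * \<epsilon>" using eqAB by linarith
  then show False by (simp add: \<epsilon>_def)
qed

definition qf :: "real \<Rightarrow> real \<Rightarrow> (real \<Rightarrow> real \<Rightarrow> real \<Rightarrow> real) \<Rightarrow> (real \<Rightarrow> real) \<Rightarrow> (real \<Rightarrow> real) \<Rightarrow> real \<Rightarrow> real" where
  "qf a b f u0 \<eta> x = along a b (D3 (D3 f)) u0 x * (dv a b \<eta> x)\<^sup>2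
     + 2 * along a b (D2 (D3 f)) u0 x * \<eta> x * dv a b \<eta> x + along a b (D2 (D2 f)) u0 x * (\<eta> x)\<^sup>2"

definition QF :: "real \<Rightarrow> real \<Rightarrow> (real \<Rightarrow> real \<Rightarrow> real \<Rightarrow> real) \<Rightarrow> (real \<Rightarrow> real) \<Rightarrow> (real \<Rightarrow> real) \<Rightarrow> real" where
  "QF a b f u0 \<eta> = integral {a..b} (qf a b f u0 \<eta>)"

definition EE :: "real \<Rightarrow> real \<Rightarrow> (real \<Rightarrow> real) \<Rightarrow> real" where
  "EE a b \<eta> = integral {a..b} (\<lambda>x. (\<eta> x)\<^sup>2 + (dv a b \<eta> x)\<^sup>2)"

lemma dist3_le: "dist (x, u', p') (x, u, p) \<le> \<bar>u' - u\<bar> + \<bar>p' - p\<bar>" for x u p u' p' :: real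
proof -
  have "dist (x, u', p') (x, u, p) = sqrt ((u'-u)\<^sup>2 + (p'-p)\<^sup>2)"
    by (simp add: dist_Pair_Pair dist_real_def)
  also have "\<dots> \<le> sqrt ((\<bar>u'-u\<bar> + \<bar>p'-p\<bar>)\<^sup>2)"
    by (rule real_sqrt_le_mono) (simp add: power2_eq_square algebra_simps abs_mult_self_eq)
  also have "\<dots> = \<bar>u' - u\<bar> + \<bar>p' - p\<bar>" by simp
  finally show ?thesis .
qed

locale vsetup =
  fixes a b :: real and f :: "real \<Rightarrow> real \<Rightarrow> real \<Rightarrow> real" and u0 :: "real \<Rightarrow> real"
    and U :: "(real \<times> real \<times> real) set"
  assumes ab: "a < b" and Uo: "open U" and Usub: "{a..b} \<times> UNIV \<times> UNIV \<subseteq> U"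
    and Ck: "Ck_on 3 U f" and u0C1: "C1_on a b u0"
begin

abbreviation "P \<equiv> along a b (D3 (D3 f)) u0"
abbreviation "Rb \<equiv> along a b (D2 (D3 f)) u0"
abbreviation "Rc \<equiv> along a b (D3 (D2 f)) u0"
abbreviation "Qc \<equiv> along a b (D2 (D2 f)) u0"
abbreviation "fu \<equiv> along a b (D2 f) u0"
abbreviation "fp \<equiv> along a b (D3 f) u0"

lemma inU: "x \<in> {a..b} \<Longrightarrow> (x,u,p) \<in> U" using Usub by auto

lemma Ck3: "Ck_on (Suc (Suc (Suc 0))) U f" using Ck by (simp add: numeral_3_eq_3)

lemma contU:
  "continuous_on U (\<lambda>(x,u,p). f x u p)"
  "continuous_on U (\<lambda>(x,u,p). D2 f x u p)"
  "continuous_on U (\<lambda>(x,u,p). D3 f x u p)"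
  "continuous_on U (\<lambda>(x,u,p). D2 (D2 f) x u p)"
  "continuous_on U (\<lambda>(x,u,p). D3 (D3 f) x u p)"
  "continuous_on U (\<lambda>(x,u,p). D2 (D3 f) x u p)"
  "continuous_on U (\<lambda>(x,u,p). D3 (D2 f) x u p)"
  using Ck3 by (auto intro: Ck_cont)

lemma cont_comp:
  assumes "continuous_on U (\<lambda>(x,u,p). g x u p)" "continuous_on {a..b} v" "continuous_on {a..b} w"
  shows "continuous_on {a..b} (\<lambda>x. g x (v x) (w x))"
proof -
  have "continuous_on {a..b} (\<lambda>x. (x, v x, w x))"
    using assms(2,3) by (intro continuous_intros) auto
  moreover have "(\<lambda>x. (x, v x, w x)) ` {a..b} \<subseteq> U" using inU by auto
  ultimately have "continuous_on {a..b} (\<lambda>x. (\<lambda>(x,u,p). g x u p) (x, v x, w x))"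
    by (rule continuous_on_compose2[OF assms(1)])
  then show ?thesis by simp
qed

lemma cont_along:
  assumes "continuous_on U (\<lambda>(x,u,p). g x u p)"
  shows "continuous_on {a..b} (along a b g u0)"
  using cont_comp[OF assms C1_cont[OF u0C1] C1_dv_cont[OF u0C1]] unfolding along_def by simp

lemma cont_coef:
  "continuous_on {a..b} P" "continuous_on {a..b} Rb" "continuous_on {a..b} Rc"
  "continuous_on {a..b} Qc" "continuous_on {a..b} fu" "continuous_on {a..b} fp"
  using contU by (auto intro: cont_along)

lemma RbRc: "x \<in> {a..b} \<Longrightarrow> Rb x = Rc x"
  unfolding along_def using schwarz[OF Ck Uo inU] by simp

lemma C1_add: "C1_on a b v \<Longrightarrow> C1_on a b w \<Longrightarrow>
   C1_on a b (\<lambda>x. v x + w x) \<and> (\<forall>x\<in>{a..b}. dv a b (\<lambda>x. v x + w x) x = dv a b v x + dv a b w x)"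
  by (rule C1I_dv[OF ab]) (auto intro!: derivative_eq_intros C1_deriv continuous_intros C1_dv_cont)

lemma C1_diff: "C1_on a b v \<Longrightarrow> C1_on a b w \<Longrightarrow>
   C1_on a b (\<lambda>x. v x - w x) \<and> (\<forall>x\<in>{a..b}. dv a b (\<lambda>x. v x - w x) x = dv a b v x - dv a b w x)"
  by (rule C1I_dv[OF ab]) (auto intro!: derivative_eq_intros C1_deriv continuous_intros C1_dv_cont)

lemma C1_cmul: "C1_on a b v \<Longrightarrow>
   C1_on a b (\<lambda>x. c * v x) \<and> (\<forall>x\<in>{a..b}. dv a b (\<lambda>x. c * v x) x = c * dv a b v x)"
  by (rule C1I_dv[OF ab]) (auto intro!: derivative_eq_intros C1_deriv continuous_intros C1_dv_cont)

lemma C1_mult: assumes "C1_on a b v" "C1_on a b w" shows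
   "C1_on a b (\<lambda>x. v x * w x) \<and> (\<forall>x\<in>{a..b}. dv a b (\<lambda>x. v x * w x) x = dv a b v x * w x + v x * dv a b w x)"
proof -
  note c = C1_cont[OF assms(1)] C1_cont[OF assms(2)] C1_dv_cont[OF assms(1)] C1_dv_cont[OF assms(2)]
  show ?thesis
    by (rule C1I_dv[OF ab]) (use assms c in \<open>auto intro!: derivative_eq_intros C1_deriv continuous_intros\<close>)
qed

lemma C1_const: "C1_on a b (\<lambda>x. c) \<and> (\<forall>x\<in>{a..b}. dv a b (\<lambda>x. c) x = 0)"
  by (rule C1I_dv[OF ab]) (auto intro!: derivative_eq_intros continuous_intros)

lemma cont_qf: "C1_on a b \<eta> \<Longrightarrow> continuous_on {a..b} (qf a b f u0 \<eta>)"
  unfolding qf_def using cont_coef C1_cont[where v=\<eta>] C1_dv_cont[where v=\<eta>] by (auto intro!: continuous_intros)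

lemma cont_E: "C1_on a b \<eta> \<Longrightarrow> continuous_on {a..b} (\<lambda>x. (\<eta> x)\<^sup>2 + (dv a b \<eta> x)\<^sup>2)"
  using C1_cont[where v=\<eta>] C1_dv_cont[where v=\<eta>] by (auto intro!: continuous_intros)

lemma EE_nonneg: "C1_on a b \<eta> \<Longrightarrow> EE a b \<eta> \<ge> 0"
  unfolding EE_def by (rule integral_nonneg) (auto intro: integrable_continuous_interval cont_E)

end

context vsetup begin

lemma unif_close:
  assumes "compact K" "K \<subseteq> U" "continuous_on U G" "(\<epsilon>::real) > 0"
  shows "\<exists>d>0. \<forall>y\<in>K. \<forall>y'\<in>K. dist y' y < d \<longrightarrow> \<bar>G y' - G y\<bar> < \<epsilon>"
proof -
  have "uniformly_continuous_on K G"
    using assms by (intro compact_uniformly_continuous) (auto intro: continuous_on_subset)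
  then show ?thesis using assms(4) unfolding uniformly_continuous_on_def dist_real_def by blast
qed

lemma integrable_C: "continuous_on {a..b} (g :: real \<Rightarrow> real) \<Longrightarrow> g integrable_on {a..b}"
  by (rule integrable_continuous_interval)

lemma Phi_add:
  assumes "C1_on a b \<eta>"
  shows "Phi a b f (\<lambda>x. u0 x + \<eta> x) = integral {a..b} (\<lambda>x. f x (u0 x + \<eta> x) (dv a b u0 x + dv a b \<eta> x))"
  unfolding Phi_def using C1_add[OF u0C1 assms] by (intro integral_cong) auto

lemma cont_F:
  assumes "C1_on a b \<eta>"
  shows "continuous_on {a..b} (\<lambda>x. f x (u0 x + \<eta> x) (dv a b u0 x + dv a b \<eta> x))"
  using C1_cont[OF u0C1] C1_dv_cont[OF u0C1] C1_cont[OF assms] C1_dv_cont[OF assms]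
  by (intro cont_comp[OF contU(1)] continuous_intros) auto

end

locale esetup = vsetup +
  assumes extremal: "\<forall>x\<in>{a..b}. (along a b (D3 f) u0 has_real_derivative along a b (D2 f) u0 x) (at x within {a..b})"
    and nat_a: "along a b (D3 f) u0 a = 0"
    and nat_b: "along a b (D3 f) u0 b = 0"
begin

lemma first_var:
  assumes "C1_on a b \<eta>"
  shows "integral {a..b} (\<lambda>x. fu x * \<eta> x + fp x * dv a b \<eta> x) = 0"
proof -
  have "((\<lambda>x. fp x * dv a b \<eta> x + fu x * \<eta> x) has_integral (fp b * \<eta> b - fp a * \<eta> a)) {a..b}"
  proof (rule fundamental_theorem_of_calculus[OF less_imp_le[OF ab]])
    fix x assume x: "x \<in> {a..b}"
    show "((\<lambda>x. fp x * \<eta> x) has_vector_derivative fp x * dv a b \<eta> x + fu x * \<eta> x) (at x within {a..b})"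
      unfolding has_real_derivative_iff_has_vector_derivative[symmetric]
      using DERIV_mult'[OF extremal[rule_format, OF x] C1_deriv[OF assms x]] .
  qed
  then show ?thesis using nat_a nat_b by (simp add: add.commute integral_unique)
qed

lemma taylor_est:
  assumes e0: "\<epsilon> > 0"
  shows "\<exists>\<delta>>0. \<forall>\<eta>. C1_on a b \<eta> \<and> (\<forall>x\<in>{a..b}. \<bar>\<eta> x\<bar> \<le> \<delta> \<and> \<bar>dv a b \<eta> x\<bar> \<le> \<delta>) \<longrightarrow>
     \<bar>Phi a b f (\<lambda>x. u0 x + \<eta> x) - Phi a b f u0 - QF a b f u0 \<eta> / 2\<bar> \<le> \<epsilon> * EE a b \<eta>"
proof -
  obtain M1 where M1: "\<forall>x\<in>{a..b}. \<bar>u0 x\<bar> \<le> M1" using cont_bound[OF C1_cont[OF u0C1]] by blast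
  obtain M2 where M2: "\<forall>x\<in>{a..b}. \<bar>dv a b u0 x\<bar> \<le> M2" using cont_bound[OF C1_dv_cont[OF u0C1]] by blast
  define M where "M = max M1 M2 + 1"
  define K where "K = {a..b} \<times> {-M..M} \<times> {-M..M}"
  have cK: "compact K" unfolding K_def by (intro compact_Times compact_Icc)
  have KU: "K \<subseteq> U" unfolding K_def using inU by auto
  obtain d1 where d1: "d1 > 0" "\<forall>y\<in>K. \<forall>y'\<in>K. dist y' y < d1 \<longrightarrow>
       \<bar>(\<lambda>(x,u,p). D2 (D2 f) x u p) y' - (\<lambda>(x,u,p). D2 (D2 f) x u p) y\<bar> < \<epsilon>"
    using unif_close[OF cK KU contU(4) e0] by blast
  obtain d2 where d2: "d2 > 0" "\<forall>y\<in>K. \<forall>y'\<in>K. dist y' y < d2 \<longrightarrow>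
       \<bar>(\<lambda>(x,u,p). D3 (D3 f) x u p) y' - (\<lambda>(x,u,p). D3 (D3 f) x u p) y\<bar> < \<epsilon>"
    using unif_close[OF cK KU contU(5) e0] by blast
  obtain d3 where d3: "d3 > 0" "\<forall>y\<in>K. \<forall>y'\<in>K. dist y' y < d3 \<longrightarrow>
       \<bar>(\<lambda>(x,u,p). D2 (D3 f) x u p) y' - (\<lambda>(x,u,p). D2 (D3 f) x u p) y\<bar> < \<epsilon>"
    using unif_close[OF cK KU contU(6) e0] by blast
  define \<delta> where "\<delta> = min (1/2) (min d1 (min d2 d3) / 3)"
  have \<delta>0: "\<delta> > 0" using d1 d2 d3 by (simp add: \<delta>_def)
  show ?thesis
  proof (intro exI[of _ \<delta>] conjI allI impI \<delta>0)
    fix \<eta> assume H: "C1_on a b \<eta> \<and> (\<forall>x\<in>{a..b}. \<bar>\<eta> x\<bar> \<le> \<delta> \<and> \<bar>dv a b \<eta> x\<bar> \<le> \<delta>)"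
    then have C1: "C1_on a b \<eta>" and small: "\<And>x. x \<in> {a..b} \<Longrightarrow> \<bar>\<eta> x\<bar> \<le> \<delta> \<and> \<bar>dv a b \<eta> x\<bar> \<le> \<delta>" by auto
    define F where "F x = f x (u0 x + \<eta> x) (dv a b u0 x + dv a b \<eta> x)" for x
    define G where "G x = f x (u0 x) (dv a b u0 x)" for x
    define L where "L x = fu x * \<eta> x + fp x * dv a b \<eta> x" for x
    define E where "E x = (\<eta> x)\<^sup>2 + (dv a b \<eta> x)\<^sup>2" for x
    have pt: "\<bar>F x - G x - L x - qf a b f u0 \<eta> x / 2\<bar> \<le> \<epsilon> * E x" if x: "x \<in> {a..b}" for x
    proof -
      define u where "u = u0 x"
      define p where "p = dv a b u0 x"
      define e where "e = \<eta> x"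
      define z where "z = dv a b \<eta> x"
      have up: "\<bar>u\<bar> \<le> M - 1" "\<bar>p\<bar> \<le> M - 1" using M1 M2 x by (auto simp: M_def u_def p_def le_max_iff_disj)
      have ez: "\<bar>e\<bar> \<le> \<delta>" "\<bar>z\<bar> \<le> \<delta>" using small[OF x] by (auto simp: e_def z_def)
      have inK: "(x, u', p') \<in> K" if "\<bar>u'\<bar> \<le> M" "\<bar>p'\<bar> \<le> M" for u' p'
        using that x by (auto simp: K_def abs_le_iff)
      have \<delta>1: "\<delta> \<le> 1/2" "3 * \<delta> \<le> d1" "3 * \<delta> \<le> d2" "3 * \<delta> \<le> d3" by (auto simp: \<delta>_def)
      have c1: "\<bar>D2 (D2 f) x (u+s) p - D2 (D2 f) x u p\<bar> \<le> \<epsilon>" if "\<bar>s\<bar> \<le> \<bar>e\<bar>" for s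
      proof -
        have "dist (x, u+s, p) (x, u, p) < d1" using dist3_le[of x "u+s" p u p] that ez \<delta>1 \<delta>0 by simp
        moreover have "(x, u+s, p) \<in> K" "(x,u,p) \<in> K" using up that ez \<delta>1 by (auto intro!: inK)
        ultimately show ?thesis using d1(2) by fastforce
      qed
      have c3: "\<bar>D2 (D3 f) x (u+s) p - D2 (D3 f) x u p\<bar> \<le> \<epsilon>" if "\<bar>s\<bar> \<le> \<bar>e\<bar>" for s
      proof -
        have "dist (x, u+s, p) (x, u, p) < d3" using dist3_le[of x "u+s" p u p] that ez \<delta>1 \<delta>0 by simp
        moreover have "(x, u+s, p) \<in> K" "(x,u,p) \<in> K" using up that ez \<delta>1 by (auto intro!: inK)
        ultimately show ?thesis using d3(2) by fastforce
      qed
      have c2: "\<bar>D3 (D3 f) x (u+e) (p+t) - D3 (D3 f) x u p\<bar> \<le> \<epsilon>" if "\<bar>t\<bar> \<le> \<bar>z\<bar>" for t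
      proof -
        have "dist (x, u+e, p+t) (x, u, p) < d2" using dist3_le[of x "u+e" "p+t" u p] that ez \<delta>1 \<delta>0 by simp
        moreover have "(x, u+e, p+t) \<in> K" "(x,u,p) \<in> K" using up that ez \<delta>1 by (auto intro!: inK)
        ultimately show ?thesis using d2(2) by fastforce
      qed
      have "\<bar>f x (u+e) (p+z) - f x u p - (D2 f x u p * e + D3 f x u p * z)
          - (D2 (D2 f) x u p * e\<^sup>2/2 + D2 (D3 f) x u p * e * z + D3 (D3 f) x u p * z\<^sup>2/2)\<bar> \<le> \<epsilon> * (e\<^sup>2 + z\<^sup>2)"
        by (rule pt_taylor[OF Ck inU[OF x] c1 c2 c3])
      moreover have "F x - G x - L x - qf a b f u0 \<eta> x / 2 = f x (u+e) (p+z) - f x u p - (D2 f x u p * e + D3 f x u p * z)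
          - (D2 (D2 f) x u p * e\<^sup>2/2 + D2 (D3 f) x u p * e * z + D3 (D3 f) x u p * z\<^sup>2/2)"
        by (simp add: F_def G_def L_def qf_def along_def u_def p_def e_def z_def field_simps)
      ultimately show ?thesis by (simp add: E_def e_def z_def)
    qed
    have iF: "F integrable_on {a..b}" unfolding F_def by (rule integrable_C[OF cont_F[OF C1]])
    have iG: "G integrable_on {a..b}" unfolding G_def
      using cont_F[OF C1_const[THEN conjunct1, of 0]] C1_const[of 0]
      by (intro integrable_C) (simp add: cont_comp[OF contU(1) C1_cont[OF u0C1] C1_dv_cont[OF u0C1]])
    have iL: "L integrable_on {a..b}" unfolding L_def
      using cont_coef C1_cont[OF C1] C1_dv_cont[OF C1] by (intro integrable_C continuous_intros) auto
    have iq: "qf a b f u0 \<eta> integrable_on {a..b}" by (rule integrable_C[OF cont_qf[OF C1]])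
    have iE: "E integrable_on {a..b}" unfolding E_def by (rule integrable_C[OF cont_E[OF C1]])
    have "norm (integral {a..b} (\<lambda>x. F x - G x - L x - qf a b f u0 \<eta> x / 2)) \<le> integral {a..b} (\<lambda>x. \<epsilon> * E x)"
      by (rule integral_norm_bound_integral) (use pt iF iG iL iq iE in \<open>auto intro!: integrable_diff integrable_on_mult_right integrable_divide\<close>)
    moreover have "integral {a..b} (\<lambda>x. F x - G x - L x - qf a b f u0 \<eta> x / 2)
        = integral {a..b} F - integral {a..b} G - integral {a..b} L - integral {a..b} (qf a b f u0 \<eta>) / 2"
      using iF iG iL iq by (simp add: integral_diff integrable_diff integrable_divide)
    moreover have "integral {a..b} L = 0" unfolding L_def by (rule first_var[OF C1])
    moreover have "integral {a..b} F = Phi a b f (\<lambda>x. u0 x + \<eta> x)" unfolding F_def by (rule Phi_add[OF C1, symmetric])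
    moreover have "integral {a..b} G = Phi a b f u0" unfolding G_def Phi_def ..
    moreover have "integral {a..b} E = EE a b \<eta>" unfolding EE_def by (rule arg_cong[where f="integral _"]) (simp add: E_def fun_eq_iff)
    ultimately show "\<bar>Phi a b f (\<lambda>x. u0 x + \<eta> x) - Phi a b f u0 - QF a b f u0 \<eta> / 2\<bar> \<le> \<epsilon> * EE a b \<eta>"
      by (simp add: QF_def)
  qed
qed

end

lemma gronwall_zero:
  fixes E E' :: "real \<Rightarrow> real"
  assumes y: "y \<in> {a..b}"
    and der: "\<And>x. x \<in> {a..b} \<Longrightarrow> (E has_real_derivative E' x) (at x within {a..b})"
    and bd: "\<And>x. x \<in> {a..b} \<Longrightarrow> \<bar>E' x\<bar> \<le> L * E x"
    and nn: "\<And>x. x \<in> {a..b} \<Longrightarrow> E x \<ge> 0"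
    and E0: "E y = 0"
    and x: "x \<in> {a..b}"
  shows "E x = 0"
proof (cases "y \<le> x")
  case True
  define F where "F t = E t * exp (- L * t)" for t
  define F' where "F' t = E' t * exp (- L * t) + E t * (exp (- L * t) * (- L))" for t
  have "\<exists>\<xi>\<in>{y..x}. F x - F y = (\<lambda>d. F' \<xi> * d) (x - y)"
  proof (rule mvt_very_simple[OF True])
    fix t assume t: "y \<le> t" "t \<le> x"
    then have tab: "t \<in> {a..b}" using x y by auto
    have "(E has_real_derivative E' t) (at t within {y..x})"
      by (rule DERIV_subset[OF der[OF tab]]) (use x y in auto)
    then have "(F has_real_derivative F' t) (at t within {y..x})"
      unfolding F_def F'_def by (auto intro!: derivative_eq_intros)
    then show "(F has_derivative (\<lambda>d. F' t * d)) (at t within {y..x})"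
      by (simp add: has_field_derivative_def)
  qed
  then obtain \<xi> where \<xi>: "\<xi> \<in> {y..x}" "F x - F y = F' \<xi> * (x - y)" by auto
  have \<xi>ab: "\<xi> \<in> {a..b}" using \<xi> x y by auto
  have "F' \<xi> = (E' \<xi> - L * E \<xi>) * exp (- L * \<xi>)" by (simp add: F'_def algebra_simps)
  moreover have "E' \<xi> - L * E \<xi> \<le> 0" using bd[OF \<xi>ab] by linarith
  ultimately have "F' \<xi> \<le> 0" by (simp add: mult_nonpos_nonneg)
  then have "F x \<le> 0" using \<xi> True E0 mult_nonpos_nonneg[of "F' \<xi>" "x - y"] by (simp add: F_def)
  then have "E x \<le> 0" by (simp add: F_def mult_le_0_iff)
  then show ?thesis using nn[OF x] by simp
next
  case False
  then have xy: "x \<le> y" by simp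
  define F where "F t = E t * exp (L * t)" for t
  define F' where "F' t = E' t * exp (L * t) + E t * (exp (L * t) * L)" for t
  have "\<exists>\<xi>\<in>{x..y}. F y - F x = (\<lambda>d. F' \<xi> * d) (y - x)"
  proof (rule mvt_very_simple[OF xy])
    fix t assume t: "x \<le> t" "t \<le> y"
    then have tab: "t \<in> {a..b}" using x y by auto
    have "(E has_real_derivative E' t) (at t within {x..y})"
      by (rule DERIV_subset[OF der[OF tab]]) (use x y in auto)
    then have "(F has_real_derivative F' t) (at t within {x..y})"
      unfolding F_def F'_def by (auto intro!: derivative_eq_intros)
    then show "(F has_derivative (\<lambda>d. F' t * d)) (at t within {x..y})"
      by (simp add: has_field_derivative_def)
  qed
  then obtain \<xi> where \<xi>: "\<xi> \<in> {x..y}" "F y - F x = F' \<xi> * (y - x)" by auto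
  have \<xi>ab: "\<xi> \<in> {a..b}" using \<xi> x y by auto
  have "F' \<xi> = (E' \<xi> + L * E \<xi>) * exp (L * \<xi>)" by (simp add: F'_def algebra_simps)
  moreover have "E' \<xi> + L * E \<xi> \<ge> 0" using bd[OF \<xi>ab] by linarith
  ultimately have "F' \<xi> \<ge> 0" by simp
  moreover have "y - x \<ge> 0" using xy by simp
  ultimately have "F' \<xi> * (y - x) \<ge> 0" by (rule mult_nonneg_nonneg)
  moreover have "F y = 0" using E0 by (simp add: F_def)
  ultimately have "F x \<le> 0" using \<xi>(2) by linarith
  then have "E x \<le> 0" by (simp add: F_def mult_le_0_iff)
  then show ?thesis using nn[OF x] by simp
qed

lemma ode_ineq:
  fixes \<alpha> \<beta> \<gamma> A K :: real
  assumes "\<alpha> \<ge> 0" "\<beta> \<ge> 0" "\<gamma> \<ge> 0" "A \<ge> 0" "K \<ge> 0" "\<gamma> \<le> A * (\<alpha> + \<beta>)"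
  shows "2 * \<alpha> * \<gamma> + 2 * \<beta> * (K * \<gamma> + K * \<alpha>) \<le> (3 * A + 3 * K * A + K) * (\<alpha>\<^sup>2 + \<beta>\<^sup>2)"
proof -
  have ab: "2 * (\<alpha> * \<beta>) \<le> \<alpha>\<^sup>2 + \<beta>\<^sup>2" using sum_squares_bound[of \<alpha> \<beta>] by (simp add: power2_eq_square)
  have 1: "\<alpha> * \<gamma> \<le> \<alpha> * (A * (\<alpha> + \<beta>))" using assms by (simp add: mult_left_mono)
  have 2: "\<beta> * \<gamma> \<le> \<beta> * (A * (\<alpha> + \<beta>))" using assms by (simp add: mult_left_mono)
  have 3: "\<alpha> * (\<alpha> + \<beta>) \<le> 3/2 * (\<alpha>\<^sup>2 + \<beta>\<^sup>2)"
  proof -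
    have "\<alpha> * (\<alpha> + \<beta>) = \<alpha>\<^sup>2 + \<alpha> * \<beta>" by (simp add: power2_eq_square algebra_simps)
    then have "\<alpha> * (\<alpha> + \<beta>) \<le> 3/2 * \<alpha>\<^sup>2 + 3/2 * \<beta>\<^sup>2" using ab zero_le_power2[of \<beta>] by linarith
    then show ?thesis by (simp add: distrib_left)
  qed
  have 4: "\<beta> * (\<alpha> + \<beta>) \<le> 3/2 * (\<alpha>\<^sup>2 + \<beta>\<^sup>2)"
  proof -
    have "\<beta> * (\<alpha> + \<beta>) = \<beta>\<^sup>2 + \<alpha> * \<beta>" by (simp add: power2_eq_square algebra_simps)
    then have "\<beta> * (\<alpha> + \<beta>) \<le> 3/2 * \<alpha>\<^sup>2 + 3/2 * \<beta>\<^sup>2" using ab zero_le_power2[of \<alpha>] by linarith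
    then show ?thesis by (simp add: distrib_left)
  qed
  have 5: "2 * \<alpha> * \<gamma> \<le> 3 * A * (\<alpha>\<^sup>2 + \<beta>\<^sup>2)"
    using 1 mult_left_mono[OF 3 assms(4)] by (simp add: algebra_simps)
  have 6: "2 * K * (\<beta> * \<gamma>) \<le> 3 * K * A * (\<alpha>\<^sup>2 + \<beta>\<^sup>2)"
    using mult_left_mono[OF 2 assms(5)] mult_left_mono[OF mult_left_mono[OF 4 assms(4)] assms(5)]
    by (simp add: algebra_simps)
  have 7: "2 * K * (\<alpha> * \<beta>) \<le> K * (\<alpha>\<^sup>2 + \<beta>\<^sup>2)" using mult_left_mono[OF ab assms(5)] by (simp add: algebra_simps)
  show ?thesis using 5 6 7 by (simp add: algebra_simps)
qed

locale jsetup = esetup +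
  fixes h :: "real \<Rightarrow> real" and c0 :: real
  assumes c0: "c0 > 0" "\<forall>x\<in>{a..b}. along a b (D3 (D3 f)) u0 x \<ge> c0"
    and jac: "jacobi_solution a b f u0 h"
    and Ba: "Bop a b f u0 h a = 0"
begin

abbreviation "g \<equiv> Bop a b f u0 h"
abbreviation "cg \<equiv> Cop a b f u0 h"

lemma hC1: "C1_on a b h" using jac by (simp add: jacobi_solution_def C2_on_def)

lemma g_der: "x \<in> {a..b} \<Longrightarrow> (g has_real_derivative cg x) (at x within {a..b})"
  using jac by (simp add: jacobi_solution_def)

lemma g_eq: "g x = P x * dv a b h x + Rb x * h x" by (simp add: Bop_def)
lemma cg_eq: "cg x = Rc x * dv a b h x + Qc x * h x" by (simp add: Cop_def)

lemma g_cont: "continuous_on {a..b} g"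
  unfolding Bop_def using cont_coef C1_cont[OF hC1] C1_dv_cont[OF hC1] by (auto intro!: continuous_intros)

lemma cg_cont: "continuous_on {a..b} cg"
  unfolding Cop_def using cont_coef C1_cont[OF hC1] C1_dv_cont[OF hC1] by (auto intro!: continuous_intros)

lemma uniq:
  assumes y: "y \<in> {a..b}" and hy: "h y = 0" and gy: "g y = 0" and x: "x \<in> {a..b}"
  shows "h x = 0"
proof -
  obtain K1 where K1: "\<forall>x\<in>{a..b}. \<bar>Rb x\<bar> \<le> K1" using cont_bound[OF cont_coef(2)] by blast
  obtain K2 where K2: "\<forall>x\<in>{a..b}. \<bar>Rc x\<bar> \<le> K2" using cont_bound[OF cont_coef(3)] by blast
  obtain K3 where K3: "\<forall>x\<in>{a..b}. \<bar>Qc x\<bar> \<le> K3" using cont_bound[OF cont_coef(4)] by blast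
  define K where "K = max (max K1 K2) (max K3 0)"
  have K: "K \<ge> 0" "\<And>x. x \<in> {a..b} \<Longrightarrow> \<bar>Rb x\<bar> \<le> K \<and> \<bar>Rc x\<bar> \<le> K \<and> \<bar>Qc x\<bar> \<le> K"
    using K1 K2 K3 by (auto simp: K_def le_max_iff_disj)
  define A where "A = (1 + K) / c0"
  have A: "A \<ge> 0" using K c0 by (simp add: A_def)
  define E where "E t = (h t)\<^sup>2 + (g t)\<^sup>2" for t
  define E' where "E' t = 2 * h t * dv a b h t + 2 * g t * cg t" for t
  have der: "(E has_real_derivative E' t) (at t within {a..b})" if t: "t \<in> {a..b}" for t
    unfolding E_def E'_def using C1_deriv[OF hC1 t] g_der[OF t]
    by (auto intro!: derivative_eq_intros)
  have bd: "\<bar>E' t\<bar> \<le> (3 * A + 3 * K * A + K) * E t" if t: "t \<in> {a..b}" for t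
  proof -
    have Pt: "P t \<ge> c0" using c0 t by auto
    have hp: "dv a b h t = (g t - Rb t * h t) / P t" using Pt c0 by (simp add: g_eq field_simps)
    have "\<bar>g t - Rb t * h t\<bar> \<le> \<bar>g t\<bar> + K * \<bar>h t\<bar>"
    proof -
      have "\<bar>Rb t * h t\<bar> \<le> K * \<bar>h t\<bar>" using K(2)[OF t] by (simp add: abs_mult mult_right_mono)
      then show ?thesis using abs_triangle_ineq4[of "g t" "Rb t * h t"] by linarith
    qed
    also have "\<dots> \<le> (1 + K) * (\<bar>h t\<bar> + \<bar>g t\<bar>)" using K by (simp add: algebra_simps)
    finally have num: "\<bar>g t - Rb t * h t\<bar> \<le> (1 + K) * (\<bar>h t\<bar> + \<bar>g t\<bar>)" .
    have "\<bar>dv a b h t\<bar> = \<bar>g t - Rb t * h t\<bar> / P t" using Pt c0 by (simp add: hp)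
    also have "\<dots> \<le> \<bar>g t - Rb t * h t\<bar> / c0" using Pt c0 by (simp add: frac_le)
    also have "\<dots> \<le> (1 + K) * (\<bar>h t\<bar> + \<bar>g t\<bar>) / c0" using num c0 by (simp add: divide_right_mono)
    finally have hp_bd: "\<bar>dv a b h t\<bar> \<le> A * (\<bar>h t\<bar> + \<bar>g t\<bar>)" by (simp add: A_def)
    have cgb: "\<bar>cg t\<bar> \<le> K * \<bar>dv a b h t\<bar> + K * \<bar>h t\<bar>"
    proof -
      have 1: "\<bar>Rc t * dv a b h t\<bar> \<le> K * \<bar>dv a b h t\<bar>" using K(2)[OF t] by (simp add: abs_mult mult_right_mono)
      have 2: "\<bar>Qc t * h t\<bar> \<le> K * \<bar>h t\<bar>" using K(2)[OF t] by (simp add: abs_mult mult_right_mono)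
      show ?thesis unfolding cg_eq using 1 2 abs_triangle_ineq[of "Rc t * dv a b h t" "Qc t * h t"] by linarith
    qed
    have "\<bar>E' t\<bar> \<le> \<bar>2 * h t * dv a b h t\<bar> + \<bar>2 * g t * cg t\<bar>" unfolding E'_def by (rule abs_triangle_ineq)
    also have "\<dots> = 2 * \<bar>h t\<bar> * \<bar>dv a b h t\<bar> + 2 * \<bar>g t\<bar> * \<bar>cg t\<bar>" by (simp add: abs_mult)
    also have "\<dots> \<le> 2 * \<bar>h t\<bar> * \<bar>dv a b h t\<bar> + 2 * \<bar>g t\<bar> * (K * \<bar>dv a b h t\<bar> + K * \<bar>h t\<bar>)"
      using mult_left_mono[OF cgb, of "2 * \<bar>g t\<bar>"] by simp
    also have "\<dots> \<le> (3 * A + 3 * K * A + K) * ((\<bar>h t\<bar>)\<^sup>2 + (\<bar>g t\<bar>)\<^sup>2)"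
      by (rule ode_ineq) (use A K hp_bd in auto)
    finally show ?thesis by (simp add: E_def)
  qed
  have "E x = 0" by (rule gronwall_zero[OF y der bd _ _ x]) (auto simp: E_def hy gy)
  then show ?thesis by (simp add: E_def)
qed

end

context jsetup begin

lemma dv_transfer:
  assumes "C1_on a b \<eta>" "x \<in> {a..b}" "\<forall>x\<in>{a..b}. \<eta> x = \<phi> x"
    "(\<phi> has_real_derivative D) (at x within {a..b})"
  shows "dv a b \<eta> x = D"
proof -
  have "(\<eta> has_real_derivative D) (at x within {a..b})"
    by (rule has_field_derivative_transform_within[OF assms(4), of 1]) (use assms(2,3) in auto)
  then show ?thesis by (rule dv_eq[OF ab assms(2)])
qed

lemma integrable_on_ab: "continuous_on {a..b} (w :: real \<Rightarrow> real) \<Longrightarrow> (w has_integral integral {a..b} w) {a..b}"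
  using integrable_continuous_interval has_integral_integral by blast

lemma picone_gen:
  assumes ch: "C1_on a b ch" and \<eta>: "C1_on a b \<eta>" and eq: "\<forall>x\<in>{a..b}. \<eta> x = h x * ch x + s"
  shows "QF a b f u0 \<eta> = (ch b)\<^sup>2 * h b * g b - (ch a)\<^sup>2 * h a * g a
     + integral {a..b} (\<lambda>x. P x * (h x)\<^sup>2 * (dv a b ch x)\<^sup>2)
     + 2 * s * ((ch b * g b - ch a * g a) - integral {a..b} (\<lambda>x. dv a b ch x * P x * dv a b h x))
     + s\<^sup>2 * integral {a..b} Qc"
proof -
  note hd = C1_deriv[OF hC1] and chd = C1_deriv[OF ch]
  have dv\<eta>: "dv a b \<eta> x = dv a b h x * ch x + h x * dv a b ch x" if x: "x \<in> {a..b}" for x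
    by (rule dv_transfer[OF \<eta> x eq]) (use hd[OF x] chd[OF x] in \<open>auto intro!: derivative_eq_intros\<close>)
  define D1 where "D1 x = (ch x)\<^sup>2 * h x * g x" for x
  define D1' where "D1' x = 2 * ch x * dv a b ch x * h x * g x + (ch x)\<^sup>2 * dv a b h x * g x + (ch x)\<^sup>2 * h x * cg x" for x
  define D2 where "D2 x = ch x * g x" for x
  define D2' where "D2' x = dv a b ch x * g x + ch x * cg x" for x
  define W1 where "W1 x = P x * (h x)\<^sup>2 * (dv a b ch x)\<^sup>2" for x
  define W2 where "W2 x = dv a b ch x * P x * dv a b h x" for x
  have i1: "(D1' has_integral (D1 b - D1 a)) {a..b}"
  proof (rule fundamental_theorem_of_calculus[OF less_imp_le[OF ab]])
    fix x assume x: "x \<in> {a..b}"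
    show "(D1 has_vector_derivative D1' x) (at x within {a..b})"
      unfolding has_real_derivative_iff_has_vector_derivative[symmetric] D1_def D1'_def
      using hd[OF x] chd[OF x] g_der[OF x] by (auto intro!: derivative_eq_intros simp: power2_eq_square algebra_simps)
  qed
  have i2: "(D2' has_integral (D2 b - D2 a)) {a..b}"
  proof (rule fundamental_theorem_of_calculus[OF less_imp_le[OF ab]])
    fix x assume x: "x \<in> {a..b}"
    show "(D2 has_vector_derivative D2' x) (at x within {a..b})"
      unfolding has_real_derivative_iff_has_vector_derivative[symmetric] D2_def D2'_def
      using chd[OF x] g_der[OF x] by (auto intro!: derivative_eq_intros simp: algebra_simps)
  qed
  note cc = cont_coef C1_cont[OF hC1] C1_dv_cont[OF hC1] C1_cont[OF ch] C1_dv_cont[OF ch]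
  have i3: "(W1 has_integral integral {a..b} W1) {a..b}"
    by (rule integrable_on_ab) (use cc in \<open>auto simp: W1_def intro!: continuous_intros\<close>)
  have i4: "(W2 has_integral integral {a..b} W2) {a..b}"
    by (rule integrable_on_ab) (use cc in \<open>auto simp: W2_def intro!: continuous_intros\<close>)
  have i5: "(Qc has_integral integral {a..b} Qc) {a..b}"
    by (rule integrable_on_ab) (use cc in auto)
  have all: "((\<lambda>x. D1' x + W1 x + 2 * s * (D2' x - W2 x) + s\<^sup>2 * Qc x) has_integral
      (D1 b - D1 a + integral {a..b} W1 + 2 * s * ((D2 b - D2 a) - integral {a..b} W2) + s\<^sup>2 * integral {a..b} Qc)) {a..b}"
    by (intro has_integral_add has_integral_mult_right has_integral_diff i1 i2 i3 i4 i5)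
  have pw: "qf a b f u0 \<eta> x = D1' x + W1 x + 2 * s * (D2' x - W2 x) + s\<^sup>2 * Qc x" if x: "x \<in> {a..b}" for x
    unfolding qf_def dv\<eta>[OF x] eq[rule_format, OF x] D1'_def W1_def D2'_def W2_def g_eq cg_eq RbRc[OF x, symmetric]
    by (simp add: algebra_simps power2_eq_square)
  have "(qf a b f u0 \<eta> has_integral
      (D1 b - D1 a + integral {a..b} W1 + 2 * s * ((D2 b - D2 a) - integral {a..b} W2) + s\<^sup>2 * integral {a..b} Qc)) {a..b}"
    using all by (subst has_integral_cong[OF pw]) auto
  then show ?thesis unfolding QF_def
    by (simp add: integral_unique D1_def D2_def W1_def[abs_def] W2_def[abs_def])
qed

end

lemma amgm_w: "-(2 * (u * v)) \<le> u\<^sup>2 / 2 + 2 * v\<^sup>2" for u v :: real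
proof -
  have "0 \<le> (u + 2 * v)\<^sup>2" by simp
  then show ?thesis by (simp add: power2_eq_square algebra_simps)
qed

lemma sq_sum_le: "(p + q)\<^sup>2 \<le> 2 * p\<^sup>2 + 2 * q\<^sup>2" for p q :: real
proof -
  have "0 \<le> (p - q)\<^sup>2" by simp
  then show ?thesis by (simp add: power2_eq_square algebra_simps)
qed

context jsetup begin

lemma coercive:
  assumes hnz: "\<forall>x\<in>{a..b}. h x \<noteq> 0" and pos: "g b * h b > 0"
  shows "\<exists>\<kappa>>0. \<forall>\<eta>. C1_on a b \<eta> \<longrightarrow> QF a b f u0 \<eta> \<ge> \<kappa> * EE a b \<eta>"
proof -
  have "\<exists>xm\<in>{a..b}. \<forall>y\<in>{a..b}. \<bar>h xm\<bar> \<le> \<bar>h y\<bar>"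
    by (rule continuous_attains_inf) (use ab C1_cont[OF hC1] in \<open>auto intro!: continuous_intros\<close>)
  then obtain xm where xm: "xm \<in> {a..b}" "\<forall>y\<in>{a..b}. \<bar>h xm\<bar> \<le> \<bar>h y\<bar>" by blast
  define m where "m = \<bar>h xm\<bar>"
  have m0: "m > 0" using hnz xm by (simp add: m_def)
  have mle: "\<And>y. y \<in> {a..b} \<Longrightarrow> m \<le> \<bar>h y\<bar>" using xm by (simp add: m_def)
  obtain H0 where H0: "\<forall>x\<in>{a..b}. \<bar>h x\<bar> \<le> H0" using cont_bound[OF C1_cont[OF hC1]] by blast
  obtain H1 where H1: "\<forall>x\<in>{a..b}. \<bar>dv a b h x\<bar> \<le> H1" using cont_bound[OF C1_dv_cont[OF hC1]] by blast
  define \<beta> where "\<beta> = g b * h b"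
  have \<beta>0: "\<beta> > 0" using pos by (simp add: \<beta>_def)
  define \<mu> where "\<mu> = min \<beta> (c0 * m\<^sup>2)"
  have \<mu>0: "\<mu> > 0" using \<beta>0 c0 m0 by (simp add: \<mu>_def)
  define A where "A = H0\<^sup>2 + 2 * H1\<^sup>2"
  define C where "C = A * (2 * (b - a) + 4 * (b - a)\<^sup>2) + 2 * H0\<^sup>2 + 1"
  have A0: "A \<ge> 0" by (simp add: A_def)
  have C0: "C > 0"
  proof -
    have "0 \<le> A * (2 * (b - a) + 4 * (b - a)\<^sup>2)" using A0 ab by simp
    then show ?thesis unfolding C_def using zero_le_power2[of H0] by linarith
  qed
  show ?thesis
  proof (intro exI[of _ "\<mu> / C"] conjI allI impI)
    show "\<mu> / C > 0" using \<mu>0 C0 by simp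
    fix \<eta> assume \<eta>: "C1_on a b \<eta>"
    define ch where "ch x = \<eta> x / h x" for x
    define ch' where "ch' x = (dv a b \<eta> x * h x - \<eta> x * dv a b h x) / (h x * h x)" for x
    note cc = C1_cont[OF hC1] C1_dv_cont[OF hC1] C1_cont[OF \<eta>] C1_dv_cont[OF \<eta>]
    have chC: "C1_on a b ch \<and> (\<forall>x\<in>{a..b}. dv a b ch x = ch' x)"
    proof (rule C1I_dv[OF ab])
      fix x assume x: "x \<in> {a..b}"
      show "(ch has_real_derivative ch' x) (at x within {a..b})"
        unfolding ch_def ch'_def using C1_deriv[OF \<eta> x] C1_deriv[OF hC1 x] hnz x
        by (auto intro!: derivative_eq_intros)
    next
      show "continuous_on {a..b} ch'" unfolding ch'_def using cc hnz
        by (auto intro!: continuous_intros)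
    qed
    then have chC1: "C1_on a b ch" and dvch: "\<And>x. x \<in> {a..b} \<Longrightarrow> dv a b ch x = ch' x" by auto
    have eq: "\<forall>x\<in>{a..b}. \<eta> x = h x * ch x + 0" using hnz by (simp add: ch_def)
    have dv\<eta>: "dv a b \<eta> x = dv a b h x * ch x + h x * dv a b ch x" if x: "x \<in> {a..b}" for x
      by (rule dv_transfer[OF \<eta> x eq]) (use C1_deriv[OF hC1 x] C1_deriv[OF chC1 x] in \<open>auto intro!: derivative_eq_intros\<close>)
    note cc2 = cc C1_cont[OF chC1] C1_dv_cont[OF chC1] cont_coef
    define X where "X = (ch b)\<^sup>2"
    define Y where "Y = integral {a..b} (\<lambda>x. (dv a b ch x)\<^sup>2)"
    define Z where "Z = integral {a..b} (\<lambda>x. (ch x)\<^sup>2)"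
    define I1 where "I1 = integral {a..b} (\<lambda>x. P x * (h x)\<^sup>2 * (dv a b ch x)\<^sup>2)"
    have iY: "(\<lambda>x. (dv a b ch x)\<^sup>2) integrable_on {a..b}"
      by (rule integrable_continuous_interval) (use cc2 in \<open>auto intro!: continuous_intros\<close>)
    have iZ: "(\<lambda>x. (ch x)\<^sup>2) integrable_on {a..b}"
      by (rule integrable_continuous_interval) (use cc2 in \<open>auto intro!: continuous_intros\<close>)
    have iI1: "(\<lambda>x. P x * (h x)\<^sup>2 * (dv a b ch x)\<^sup>2) integrable_on {a..b}"
      by (rule integrable_continuous_interval) (use cc2 in \<open>auto intro!: continuous_intros\<close>)
    have QFeq: "QF a b f u0 \<eta> = \<beta> * X + I1"
      using picone_gen[OF chC1 \<eta> eq] Ba by (simp add: \<beta>_def X_def I1_def algebra_simps)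
    have I1ge: "I1 \<ge> c0 * m\<^sup>2 * Y"
    proof -
      have "integral {a..b} (\<lambda>x. c0 * m\<^sup>2 * (dv a b ch x)\<^sup>2) \<le> I1" unfolding I1_def
      proof (rule integral_le)
        show "(\<lambda>x. c0 * m\<^sup>2 * (dv a b ch x)\<^sup>2) integrable_on {a..b}" using iY by (rule integrable_on_mult_right)
        show "(\<lambda>x. P x * (h x)\<^sup>2 * (dv a b ch x)\<^sup>2) integrable_on {a..b}" by (rule iI1)
        fix x assume x: "x \<in> {a..b}"
        have "m\<^sup>2 \<le> (h x)\<^sup>2" using mle[OF x] m0 by (metis abs_le_square_iff abs_of_pos)
        moreover have "c0 \<le> P x" using c0 x by auto
        ultimately have "c0 * m\<^sup>2 \<le> P x * (h x)\<^sup>2" using c0 by (intro mult_mono) auto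
        then show "c0 * m\<^sup>2 * (dv a b ch x)\<^sup>2 \<le> P x * (h x)\<^sup>2 * (dv a b ch x)\<^sup>2"
          by (intro mult_right_mono) auto
      qed
      then show ?thesis unfolding Y_def by simp
    qed
    have Zle: "Z \<le> 2 * (b - a) * X + 4 * (b - a)\<^sup>2 * Y"
    proof -
      define W where "W x = (ch x)\<^sup>2 + (x - a) * (2 * ch x * dv a b ch x)" for x
      have iW: "(W has_integral ((b - a) * (ch b)\<^sup>2 - (a - a) * (ch a)\<^sup>2)) {a..b}"
      proof (rule fundamental_theorem_of_calculus[OF less_imp_le[OF ab]])
        fix x assume x: "x \<in> {a..b}"
        show "((\<lambda>x. (x - a) * (ch x)\<^sup>2) has_vector_derivative W x) (at x within {a..b})"
          unfolding has_real_derivative_iff_has_vector_derivative[symmetric] W_def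
          using C1_deriv[OF chC1 x] by (auto intro!: derivative_eq_intros simp: power2_eq_square algebra_simps)
      qed
      have "integral {a..b} (\<lambda>x. (ch x)\<^sup>2) \<le> integral {a..b} (\<lambda>x. W x + ((ch x)\<^sup>2 / 2 + 2 * (b - a)\<^sup>2 * (dv a b ch x)\<^sup>2))"
      proof (rule integral_le[OF iZ])
        show "(\<lambda>x. W x + ((ch x)\<^sup>2 / 2 + 2 * (b - a)\<^sup>2 * (dv a b ch x)\<^sup>2)) integrable_on {a..b}"
          using iW iZ iY by (intro integrable_add integrable_divide integrable_on_mult_right) auto
        fix x assume x: "x \<in> {a..b}"
        have 1: "-(2 * (ch x * ((x - a) * dv a b ch x))) \<le> (ch x)\<^sup>2 / 2 + 2 * ((x - a) * dv a b ch x)\<^sup>2"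
          by (rule amgm_w)
        have "(x - a)\<^sup>2 \<le> (b - a)\<^sup>2" using x by (intro power_mono) auto
        then have 2: "2 * ((x - a) * dv a b ch x)\<^sup>2 \<le> 2 * (b - a)\<^sup>2 * (dv a b ch x)\<^sup>2"
          by (simp add: power_mult_distrib mult_right_mono)
        have 3: "W x = (ch x)\<^sup>2 + 2 * (ch x * ((x - a) * dv a b ch x))" by (simp add: W_def algebra_simps)
        show "(ch x)\<^sup>2 \<le> W x + ((ch x)\<^sup>2 / 2 + 2 * (b - a)\<^sup>2 * (dv a b ch x)\<^sup>2)"
          using 1 2 3 by linarith
      qed
      also have "\<dots> = ((b - a) * (ch b)\<^sup>2 - (a - a) * (ch a)\<^sup>2) + (Z / 2 + 2 * (b - a)\<^sup>2 * Y)"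
      proof (rule integral_unique)
        show "((\<lambda>x. W x + ((ch x)\<^sup>2 / 2 + 2 * (b - a)\<^sup>2 * (dv a b ch x)\<^sup>2)) has_integral
            ((b - a) * (ch b)\<^sup>2 - (a - a) * (ch a)\<^sup>2) + (Z / 2 + 2 * (b - a)\<^sup>2 * Y)) {a..b}"
          unfolding Z_def Y_def
          by (intro has_integral_add iW has_integral_divide has_integral_mult_right has_integral_integral[THEN iffD1] iZ iY)
      qed
      also have "\<dots> = (b - a) * X + Z / 2 + 2 * (b - a)\<^sup>2 * Y" by (simp add: X_def)
      finally have "Z \<le> (b - a) * X + Z / 2 + 2 * (b - a)\<^sup>2 * Y" by (simp add: Z_def)
      then have "Z \<le> 2 * ((b - a) * X) + 2 * (2 * (b - a)\<^sup>2 * Y)" by linarith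
      then show ?thesis by (simp add: algebra_simps)
    qed
    have EEle: "EE a b \<eta> \<le> A * Z + 2 * H0\<^sup>2 * Y"
    proof -
      have "EE a b \<eta> \<le> integral {a..b} (\<lambda>x. A * (ch x)\<^sup>2 + 2 * H0\<^sup>2 * (dv a b ch x)\<^sup>2)"
        unfolding EE_def
      proof (rule integral_le)
        show "(\<lambda>x. (\<eta> x)\<^sup>2 + (dv a b \<eta> x)\<^sup>2) integrable_on {a..b}"
          by (rule integrable_continuous_interval[OF cont_E[OF \<eta>]])
        show "(\<lambda>x. A * (ch x)\<^sup>2 + 2 * H0\<^sup>2 * (dv a b ch x)\<^sup>2) integrable_on {a..b}"
          using iZ iY by (intro integrable_add integrable_on_mult_right)
        fix x assume x: "x \<in> {a..b}"
        have h2: "(h x)\<^sup>2 \<le> H0\<^sup>2" using H0 x by (metis abs_le_square_iff abs_ge_zero order_trans abs_of_nonneg)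
        have h12: "(dv a b h x)\<^sup>2 \<le> H1\<^sup>2" using H1 x by (metis abs_le_square_iff abs_ge_zero order_trans abs_of_nonneg)
        have e1: "(\<eta> x)\<^sup>2 \<le> H0\<^sup>2 * (ch x)\<^sup>2"
          using eq x h2 by (simp add: power_mult_distrib mult_right_mono)
        have "(dv a b \<eta> x)\<^sup>2 \<le> 2 * (dv a b h x * ch x)\<^sup>2 + 2 * (h x * dv a b ch x)\<^sup>2"
          unfolding dv\<eta>[OF x] by (rule sq_sum_le)
        also have "\<dots> \<le> 2 * (H1\<^sup>2 * (ch x)\<^sup>2) + 2 * (H0\<^sup>2 * (dv a b ch x)\<^sup>2)"
          using h2 h12 by (intro add_mono mult_left_mono) (auto simp: power_mult_distrib mult_right_mono)
        finally have e2: "(dv a b \<eta> x)\<^sup>2 \<le> 2 * (H1\<^sup>2 * (ch x)\<^sup>2) + 2 * (H0\<^sup>2 * (dv a b ch x)\<^sup>2)" .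
        show "(\<eta> x)\<^sup>2 + (dv a b \<eta> x)\<^sup>2 \<le> A * (ch x)\<^sup>2 + 2 * H0\<^sup>2 * (dv a b ch x)\<^sup>2"
          using e1 e2 by (simp add: A_def algebra_simps)
      qed
      also have "\<dots> = A * Z + 2 * H0\<^sup>2 * Y"
        using iZ iY by (simp add: integral_add integrable_on_mult_right Z_def Y_def)
      finally show ?thesis .
    qed
    have X0: "X \<ge> 0" by (simp add: X_def)
    have Y0: "Y \<ge> 0" unfolding Y_def by (rule integral_nonneg[OF iY]) simp
    have "EE a b \<eta> \<le> A * (2 * (b - a) * X + 4 * (b - a)\<^sup>2 * Y) + 2 * H0\<^sup>2 * Y"
      using EEle mult_left_mono[OF Zle A0] by linarith
    also have "\<dots> \<le> C * (X + Y)"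
    proof -
      have "A * (2 * (b - a) * X) \<le> A * (2 * (b - a) + 4 * (b - a)\<^sup>2) * X"
      proof -
        have k: "2 * (b - a) \<le> 2 * (b - a) + 4 * (b - a)\<^sup>2" by simp
        have "A * X * (2 * (b - a)) \<le> A * X * (2 * (b - a) + 4 * (b - a)\<^sup>2)"
          using mult_left_mono[OF k, of "A * X"] A0 X0 by simp
        then show ?thesis by (simp add: algebra_simps)
      qed
      moreover have "A * (4 * (b - a)\<^sup>2 * Y) \<le> A * (2 * (b - a) + 4 * (b - a)\<^sup>2) * Y"
      proof -
        have k: "4 * (b - a)\<^sup>2 \<le> 2 * (b - a) + 4 * (b - a)\<^sup>2" using ab by simp
        have "A * Y * (4 * (b - a)\<^sup>2) \<le> A * Y * (2 * (b - a) + 4 * (b - a)\<^sup>2)"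
          using mult_left_mono[OF k, of "A * Y"] A0 Y0 by simp
        then show ?thesis by (simp add: algebra_simps)
      qed
      moreover have "2 * H0\<^sup>2 * Y \<le> (2 * H0\<^sup>2 + 1) * Y" using Y0 by (simp add: mult_right_mono)
      moreover have "0 \<le> (2 * H0\<^sup>2 + 1) * X" using X0 by simp
      moreover have "0 \<le> A * (2 * (b - a) + 4 * (b - a)\<^sup>2) * Y" using A0 Y0 ab by simp
      moreover have "0 \<le> A * (2 * (b - a) + 4 * (b - a)\<^sup>2) * X" using A0 X0 ab by simp
      ultimately show ?thesis by (simp add: C_def algebra_simps)
    qed
    finally have EEC: "EE a b \<eta> \<le> C * (X + Y)" .
    have "\<mu> * (X + Y) \<le> \<beta> * X + c0 * m\<^sup>2 * Y"
    proof -
      have "\<mu> * X \<le> \<beta> * X" using X0 by (intro mult_right_mono) (auto simp: \<mu>_def)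
      moreover have "\<mu> * Y \<le> c0 * m\<^sup>2 * Y" using Y0 by (intro mult_right_mono) (auto simp: \<mu>_def)
      ultimately show ?thesis by (simp add: algebra_simps)
    qed
    also have "\<dots> \<le> QF a b f u0 \<eta>" using QFeq I1ge by linarith
    finally have QFge: "\<mu> * (X + Y) \<le> QF a b f u0 \<eta>" .
    have "\<mu> / C * EE a b \<eta> \<le> \<mu> / C * (C * (X + Y))"
      using EEC \<mu>0 C0 by (intro mult_left_mono) auto
    also have "\<dots> = \<mu> * (X + Y)" using C0 by simp
    finally show "\<mu> / C * EE a b \<eta> \<le> QF a b f u0 \<eta>" using QFge by linarith
  qed
qed

end

definition smc :: "real \<Rightarrow> real" where "smc t = max 0 (min 1 t)"
definition sm :: "real \<Rightarrow> real" where "sm t = 3 * (smc t)\<^sup>2 - 2 * (smc t)^3"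
definition smd :: "real \<Rightarrow> real" where "smd t = 6 * smc t * (1 - smc t)"

lemma deriv_Un:
  assumes "(f has_field_derivative D) (at x within S)" "(f has_field_derivative D) (at x within T)"
  shows "(f has_field_derivative D) (at x within (S \<union> T))"
  using assms unfolding has_field_derivative_def has_derivative_within Lim_within_Un by auto

lemma sm_le0: "t \<le> 0 \<Longrightarrow> sm t = 0" by (simp add: sm_def smc_def)
lemma sm_ge1: "t \<ge> 1 \<Longrightarrow> sm t = 1" by (simp add: sm_def smc_def)
lemma sm_mid: "0 \<le> t \<Longrightarrow> t \<le> 1 \<Longrightarrow> sm t = 3 * t\<^sup>2 - 2 * t^3" by (simp add: sm_def smc_def)
lemma smd_mid: "0 \<le> t \<Longrightarrow> t \<le> 1 \<Longrightarrow> smd t = 6 * t - 6 * t\<^sup>2" by (simp add: smd_def smc_def algebra_simps power2_eq_square)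

lemma poly_deriv: "((\<lambda>t. 3 * t\<^sup>2 - 2 * t^3) has_real_derivative (6 * t - 6 * t\<^sup>2)) (at t within S)"
  by (auto intro!: derivative_eq_intros simp: power2_eq_square)

lemma sm_deriv: "(sm has_real_derivative smd t) (at t)"
proof -
  consider "t < 0" | "t = 0" | "0 < t \<and> t < 1" | "t = 1" | "t > 1" by linarith
  then show ?thesis
  proof cases
    case 1
    have "((\<lambda>_. 0) has_real_derivative 0) (at t)" by simp
    then have "(sm has_real_derivative 0) (at t)"
      by (rule has_field_derivative_transform_within_open[where S="{..<0}"]) (use 1 sm_le0 in auto)
    then show ?thesis using 1 by (simp add: smd_def smc_def)
  next
    case 3
    have "(sm has_real_derivative (6 * t - 6 * t\<^sup>2)) (at t)"
      by (rule has_field_derivative_transform_within_open[OF poly_deriv, where S="{0<..<1}"]) (use 3 sm_mid in auto)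
    then show ?thesis using 3 smd_mid by simp
  next
    case 5
    have "((\<lambda>_. 1) has_real_derivative 0) (at t)" by simp
    then have "(sm has_real_derivative 0) (at t)"
      by (rule has_field_derivative_transform_within_open[where S="{1<..}"]) (use 5 sm_ge1 in auto)
    then show ?thesis using 5 by (simp add: smd_def smc_def)
  next
    case 2
    have A: "(sm has_real_derivative 0) (at 0 within {..0})"
      by (rule has_field_derivative_transform_within[OF DERIV_const, of 1]) (auto simp: sm_le0)
    have B: "(sm has_real_derivative 0) (at 0 within {0..})"
    proof (rule has_field_derivative_transform_within[of "\<lambda>t. 3 * t\<^sup>2 - 2 * t^3" _ _ _ 1])
      show "((\<lambda>t. 3 * t\<^sup>2 - 2 * t ^ 3) has_real_derivative 0) (at 0 within {0..})"
        using poly_deriv[of 0 "{0..}"] by simp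
    qed (auto simp: sm_mid dist_real_def)
    have "{..0} \<union> {0..} = (UNIV :: real set)" by auto
    then have "(sm has_real_derivative 0) (at 0)" using deriv_Un[OF A B] by simp
    then show ?thesis using 2 by (simp add: smd_def smc_def)
  next
    case 4
    have A: "(sm has_real_derivative 0) (at 1 within {1..})"
      by (rule has_field_derivative_transform_within[OF DERIV_const, of 1]) (auto simp: sm_ge1)
    have B: "(sm has_real_derivative 0) (at 1 within {..1})"
    proof (rule has_field_derivative_transform_within[of "\<lambda>t. 3 * t\<^sup>2 - 2 * t^3" _ _ _ 1])
      show "((\<lambda>t. 3 * t\<^sup>2 - 2 * t ^ 3) has_real_derivative 0) (at 1 within {..1})"
        using poly_deriv[of 1 "{..1}"] by simp
    qed (auto simp: sm_mid dist_real_def)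
    have "{..1} \<union> {1..} = (UNIV :: real set)" by auto
    then have "(sm has_real_derivative 0) (at 1)" using deriv_Un[OF B A] by simp
    then show ?thesis using 4 by (simp add: smd_def smc_def)
  qed
qed

lemma smd_cont: "continuous_on S smd"
  unfolding smd_def smc_def by (intro continuous_intros)

lemma smd_nonneg: "smd t \<ge> 0" by (simp add: smd_def smc_def)

lemma smd_le: "smd t \<le> 3/2"
proof -
  have "0 \<le> (smc t - 1/2)\<^sup>2" by simp
  then show ?thesis by (simp add: smd_def power2_eq_square algebra_simps)
qed

lemma smd_supp: "smd t \<noteq> 0 \<Longrightarrow> 0 < t \<and> t < 1"
  by (auto simp: smd_def smc_def split: if_splits)

context vsetup begin

lemma lip:
  assumes v: "C1_on a b v" and B: "\<forall>t\<in>{a..b}. \<bar>dv a b v t\<bar> \<le> B"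
    and x: "x \<in> {a..b}" and y: "y \<in> {a..b}"
  shows "\<bar>v x - v y\<bar> \<le> B * \<bar>x - y\<bar>"
proof -
  have main: "\<bar>v q - v p\<bar> \<le> B * (q - p)" if pq: "p \<le> q" "p \<in> {a..b}" "q \<in> {a..b}" for p q
  proof -
    have "\<exists>\<xi>\<in>{p..q}. v q - v p = (\<lambda>d. dv a b v \<xi> * d) (q - p)"
    proof (rule mvt_very_simple[OF pq(1)])
      fix t assume t: "p \<le> t" "t \<le> q"
      then have tab: "t \<in> {a..b}" using pq by auto
      have "(v has_real_derivative dv a b v t) (at t within {p..q})"
        by (rule DERIV_subset[OF C1_deriv[OF v tab]]) (use pq in auto)
      then show "(v has_derivative (\<lambda>d. dv a b v t * d)) (at t within {p..q})"
        by (simp add: has_field_derivative_def)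
    qed
    then obtain \<xi> where \<xi>: "\<xi> \<in> {p..q}" "v q - v p = dv a b v \<xi> * (q - p)" by auto
    have "\<xi> \<in> {a..b}" using \<xi> pq by auto
    then have "\<bar>dv a b v \<xi>\<bar> \<le> B" using B by auto
    then show ?thesis using \<xi> pq by (simp add: abs_mult mult_right_mono)
  qed
  show ?thesis
  proof (cases "x \<le> y")
    case True then show ?thesis using main[OF True x y] by (simp add: abs_minus_commute)
  next
    case False then show ?thesis using main[of y x] x y by simp
  qed
qed

end

context jsetup begin

lemma neg_dir:
  assumes nontriv: "\<exists>x\<in>{a..b}. h x \<noteq> 0"
    and cases: "(\<exists>y\<in>{a<..b}. h y = 0) \<or> g b * h b < 0"
  shows "\<exists>\<eta>. C1_on a b \<eta> \<and> QF a b f u0 \<eta> < 0"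
  using cases
proof
  assume neg: "g b * h b < 0"
  have c1: "C1_on a b (\<lambda>x. 1)" and dv1: "\<forall>x\<in>{a..b}. dv a b (\<lambda>x. 1) x = 0" using C1_const by auto
  have "QF a b f u0 h = 1\<^sup>2 * h b * g b - 1\<^sup>2 * h a * g a + integral {a..b} (\<lambda>x. P x * (h x)\<^sup>2 * (dv a b (\<lambda>x. 1) x)\<^sup>2)
     + 2 * 0 * ((1 * g b - 1 * g a) - integral {a..b} (\<lambda>x. dv a b (\<lambda>x. 1) x * P x * dv a b h x))
     + 0\<^sup>2 * integral {a..b} Qc"
    by (rule picone_gen[OF c1 hC1]) simp
  also have "integral {a..b} (\<lambda>x. P x * (h x)\<^sup>2 * (dv a b (\<lambda>x. 1) x)\<^sup>2) = integral {a..b} (\<lambda>x. 0)"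
    by (rule integral_cong) (simp add: dv1)
  finally have "QF a b f u0 h = h b * g b" using Ba by simp
  then show ?thesis using neg hC1 by (intro exI[of _ h]) (simp add: mult.commute)
next
  assume "\<exists>y\<in>{a<..b}. h y = 0"
  then obtain y where y: "a < y" "y \<le> b" "h y = 0" by auto
  have yab: "y \<in> {a..b}" using y by auto
  have gy: "g y \<noteq> 0"
  proof
    assume "g y = 0"
    then have "\<forall>x\<in>{a..b}. h x = 0" using uniq[OF yab y(3)] by blast
    then show False using nontriv by blast
  qed
  define k where "k x = P x * dv a b h x" for x
  define K0 where "K0 = g y"
  have kK0: "k y = K0" using y by (simp add: k_def K0_def g_eq)
  have K0: "K0 \<noteq> 0" using gy by (simp add: K0_def)
  have kcont: "continuous_on {a..b} k" unfolding k_def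
    using cont_coef C1_dv_cont[OF hC1] by (auto intro!: continuous_intros)
  obtain Pm where Pm: "\<forall>x\<in>{a..b}. \<bar>P x\<bar> \<le> Pm" using cont_bound[OF cont_coef(1)] by blast
  obtain H1 where H1: "\<forall>x\<in>{a..b}. \<bar>dv a b h x\<bar> \<le> H1" using cont_bound[OF C1_dv_cont[OF hC1]] by blast
  have Pm0: "Pm \<ge> 0" using Pm ab by (meson abs_ge_zero atLeastAtMost_iff less_imp_le order_trans order_refl)
  have H10: "H1 \<ge> 0" using H1 ab by (meson abs_ge_zero atLeastAtMost_iff less_imp_le order_trans order_refl)
  define Qi where "Qi = integral {a..b} Qc"
  define t where "t = 1 / (1 + \<bar>Qi\<bar>)"
  have t0: "t > 0" by (simp add: t_def add_pos_nonneg)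
  have tQ: "t * \<bar>Qi\<bar> \<le> 1" by (simp add: t_def)
  define \<epsilon> where "\<epsilon> = \<bar>K0\<bar> / 4"
  have \<epsilon>0: "\<epsilon> > 0" using K0 by (simp add: \<epsilon>_def)
  obtain d where d: "d > 0" "\<And>x. x \<in> {a..b} \<Longrightarrow> \<bar>x - y\<bar> < d \<Longrightarrow> \<bar>k x - k y\<bar> < \<epsilon>"
    using kcont yab \<epsilon>0 unfolding continuous_on_iff dist_real_def by metis
  define CC where "CC = 3/2 * Pm * H1\<^sup>2"
  have CC0: "CC \<ge> 0" using Pm0 by (simp add: CC_def)
  define \<delta> where "\<delta> = min (y - a) (min d (t * K0\<^sup>2 / (4 * CC + 1)))"
  have \<delta>0: "\<delta> > 0" using y d t0 K0 CC0 by (simp add: \<delta>_def add_nonneg_pos)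
  have \<delta>ya: "\<delta> \<le> y - a" and \<delta>d: "\<delta> \<le> d" by (auto simp: \<delta>_def)
  have \<delta>C: "CC * \<delta> \<le> t * K0\<^sup>2 / 4"
  proof -
    have "\<delta> \<le> t * K0\<^sup>2 / (4 * CC + 1)" by (simp add: \<delta>_def)
    then have "CC * \<delta> \<le> CC * (t * K0\<^sup>2 / (4 * CC + 1))" using CC0 by (intro mult_left_mono)
    also have "\<dots> \<le> t * K0\<^sup>2 / 4"
    proof -
      have "0 \<le> t * K0\<^sup>2" using t0 by simp
      then have "CC * (t * K0\<^sup>2) * 4 \<le> (4 * CC + 1) * (t * K0\<^sup>2)"
        by (simp add: algebra_simps)
      then show ?thesis using CC0 by (simp add: field_simps)
    qed
    finally show ?thesis .
  qed
  define ch where "ch x = sm ((y - x) / \<delta>)" for x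
  define w where "w x = smd ((y - x) / \<delta>) / \<delta>" for x
  have chder: "(ch has_real_derivative (- w x)) (at x within {a..b})" for x
  proof -
    have "((\<lambda>x. (y - x) / \<delta>) has_real_derivative (- 1 / \<delta>)) (at x within {a..b})"
      using \<delta>0 by (auto intro!: derivative_eq_intros)
    from DERIV_chain2[OF sm_deriv this] show ?thesis by (simp add: ch_def[abs_def] w_def)
  qed
  have wcont: "continuous_on {a..b} w" unfolding w_def
    using \<delta>0 by (intro continuous_intros continuous_on_compose2[OF smd_cont[of UNIV]]) auto
  have chC: "C1_on a b ch \<and> (\<forall>x\<in>{a..b}. dv a b ch x = - w x)"
    by (rule C1I_dv[OF ab chder]) (use wcont in \<open>auto intro!: continuous_intros\<close>)
  then have chC1: "C1_on a b ch" and dvch: "\<And>x. x \<in> {a..b} \<Longrightarrow> dv a b ch x = - w x" by auto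
  have cha: "ch a = 1" using \<delta>0 \<delta>ya by (auto intro!: sm_ge1 simp: ch_def field_simps)
  have chb: "ch b = 0" using \<delta>0 y by (auto intro!: sm_le0 simp: ch_def field_simps)
  have w0: "w x \<ge> 0" for x using \<delta>0 smd_nonneg by (simp add: w_def)
  have wle: "w x \<le> 3 / (2 * \<delta>)" for x using \<delta>0 smd_le[of "(y - x) / \<delta>"] by (simp add: w_def field_simps)
  have wsupp: "w x \<noteq> 0 \<Longrightarrow> y - \<delta> < x \<and> x < y" for x
    using smd_supp[of "(y - x) / \<delta>"] \<delta>0 by (auto simp: w_def field_simps)
  have iw: "(w has_integral 1) {a..b}"
  proof -
    have "((\<lambda>x. - w x) has_integral (ch b - ch a)) {a..b}"
      by (rule fundamental_theorem_of_calculus[OF less_imp_le[OF ab]])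
         (use chder in \<open>auto simp: has_real_derivative_iff_has_vector_derivative[symmetric]\<close>)
    then have "((\<lambda>x. - (- w x)) has_integral - (ch b - ch a)) {a..b}" by (rule has_integral_neg)
    then show ?thesis using cha chb by simp
  qed
  have iwint: "integral {a..b} w = 1" using iw by (rule integral_unique)
  define s where "s = - t * K0"
  define \<eta> where "\<eta> x = h x * ch x + s" for x
  have \<eta>C1: "C1_on a b \<eta>"
    unfolding \<eta>_def using C1_add[OF C1_mult[OF hC1 chC1, THEN conjunct1] C1_const[THEN conjunct1]] by simp
  define I1 where "I1 = integral {a..b} (\<lambda>x. P x * (h x)\<^sup>2 * (dv a b ch x)\<^sup>2)"
  define T2 where "T2 = integral {a..b} (\<lambda>x. w x * k x)"
  have I2: "integral {a..b} (\<lambda>x. dv a b ch x * P x * dv a b h x) = - T2"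
  proof -
    have "integral {a..b} (\<lambda>x. dv a b ch x * P x * dv a b h x) = integral {a..b} (\<lambda>x. - (w x * k x))"
      by (rule integral_cong) (simp add: dvch k_def)
    then show ?thesis by (simp add: T2_def)
  qed
  have QFeq: "QF a b f u0 \<eta> = I1 + 2 * s * T2 + s\<^sup>2 * Qi"
    using picone_gen[OF chC1 \<eta>C1, of s] cha chb Ba I2 by (simp add: \<eta>_def I1_def Qi_def algebra_simps)
  have ikw: "(\<lambda>x. w x * k x) integrable_on {a..b}"
    by (rule integrable_continuous_interval) (use wcont kcont in \<open>auto intro!: continuous_intros\<close>)
  have I1le: "I1 \<le> CC * \<delta>"
  proof -
    have "I1 \<le> integral {a..b} (\<lambda>x. CC * \<delta> * w x)" unfolding I1_def
    proof (rule integral_le)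
      show "(\<lambda>x. P x * (h x)\<^sup>2 * (dv a b ch x)\<^sup>2) integrable_on {a..b}"
        by (rule integrable_continuous_interval)
           (use cont_coef C1_cont[OF hC1] C1_dv_cont[OF chC1] in \<open>auto intro!: continuous_intros\<close>)
      show "(\<lambda>x. CC * \<delta> * w x) integrable_on {a..b}"
        by (rule integrable_on_mult_right) (rule has_integral_integrable[OF iw])
      fix x assume x: "x \<in> {a..b}"
      show "P x * (h x)\<^sup>2 * (dv a b ch x)\<^sup>2 \<le> CC * \<delta> * w x"
      proof (cases "w x = 0")
        case True then show ?thesis by (simp add: dvch[OF x])
      next
        case False
        then have xs: "y - \<delta> < x" "x < y" using wsupp by auto
        have "\<bar>h x\<bar> = \<bar>h x - h y\<bar>" using y by simp
        also have "\<dots> \<le> H1 * \<bar>x - y\<bar>" by (rule lip[OF hC1 H1 x yab])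
        also have "\<dots> \<le> H1 * \<delta>" using xs H10 by (intro mult_left_mono) auto
        finally have hx: "\<bar>h x\<bar> \<le> H1 * \<delta>" .
        then have hx2: "(h x)\<^sup>2 \<le> (H1 * \<delta>)\<^sup>2" by (metis abs_le_square_iff abs_ge_zero order_trans abs_of_nonneg)
        have Px: "P x \<le> Pm" using Pm x abs_ge_self[of "P x"] by fastforce
        have "P x * (h x)\<^sup>2 * (dv a b ch x)\<^sup>2 = P x * (h x)\<^sup>2 * (w x * w x)" by (simp add: dvch[OF x] power2_eq_square)
        also have "\<dots> \<le> Pm * (H1 * \<delta>)\<^sup>2 * (w x * (3 / (2 * \<delta>)))"
        proof (rule mult_mono)
          show "P x * (h x)\<^sup>2 \<le> Pm * (H1 * \<delta>)\<^sup>2" using Px hx2 Pm0 by (intro mult_mono) auto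
          show "w x * w x \<le> w x * (3 / (2 * \<delta>))" using w0 wle by (intro mult_left_mono) auto
          show "0 \<le> Pm * (H1 * \<delta>)\<^sup>2" using Pm0 by simp
          show "0 \<le> w x * w x" using w0 by simp
        qed
        also have "\<dots> = CC * \<delta> * w x" using \<delta>0 by (simp add: CC_def power2_eq_square field_simps)
        finally show ?thesis .
      qed
    qed
    also have "\<dots> = CC * \<delta>" using iwint by simp
    finally show ?thesis .
  qed
  have T2K: "\<bar>T2 - K0\<bar> \<le> \<epsilon>"
  proof -
    have iwK: "(\<lambda>x. w x * K0) integrable_on {a..b}"
      by (rule integrable_on_mult_left) (rule has_integral_integrable[OF iw])
    have "integral {a..b} (\<lambda>x. w x * (k x - K0)) = integral {a..b} (\<lambda>x. w x * k x - w x * K0)"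
      by (rule integral_cong) (simp add: algebra_simps)
    also have "\<dots> = integral {a..b} (\<lambda>x. w x * k x) - integral {a..b} (\<lambda>x. w x * K0)"
      by (rule integral_diff[OF ikw iwK])
    also have "integral {a..b} (\<lambda>x. w x * K0) = K0" using iwint by (simp add: integral_mult_left)
    finally have e: "T2 - K0 = integral {a..b} (\<lambda>x. w x * (k x - K0))" by (simp add: T2_def)
    have "norm (integral {a..b} (\<lambda>x. w x * (k x - K0))) \<le> integral {a..b} (\<lambda>x. \<epsilon> * w x)"
    proof (rule integral_norm_bound_integral)
      show "(\<lambda>x. w x * (k x - K0)) integrable_on {a..b}"
        by (rule integrable_continuous_interval) (use wcont kcont in \<open>auto intro!: continuous_intros\<close>)
      show "(\<lambda>x. \<epsilon> * w x) integrable_on {a..b}"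
        by (rule integrable_on_mult_right) (rule has_integral_integrable[OF iw])
      fix x assume x: "x \<in> {a..b}"
      show "norm (w x * (k x - K0)) \<le> \<epsilon> * w x"
      proof (cases "w x = 0")
        case True then show ?thesis by simp
      next
        case False
        then have "\<bar>x - y\<bar> < d" using wsupp \<delta>d by fastforce
        then have "\<bar>k x - K0\<bar> < \<epsilon>" using d(2)[OF x] kK0 by simp
        then show ?thesis using w0[of x] mult_left_mono[of "\<bar>k x - K0\<bar>" \<epsilon> "w x"] by (simp add: abs_mult mult.commute)
      qed
    qed
    also have "\<dots> = \<epsilon>" using iwint by simp
    finally show ?thesis using e by simp
  qed
  have "2 * s * T2 = - 2 * t * K0\<^sup>2 - 2 * t * K0 * (T2 - K0)" by (simp add: s_def power2_eq_square algebra_simps)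
  moreover have "- 2 * t * K0 * (T2 - K0) \<le> 2 * t * \<bar>K0\<bar> * \<epsilon>"
  proof -
    have "- 2 * t * K0 * (T2 - K0) \<le> \<bar>2 * t * K0 * (T2 - K0)\<bar>" by simp
    also have "\<dots> = 2 * t * \<bar>K0\<bar> * \<bar>T2 - K0\<bar>" using t0 by (simp add: abs_mult)
    also have "\<dots> \<le> 2 * t * \<bar>K0\<bar> * \<epsilon>" using T2K t0 by (intro mult_left_mono) auto
    finally show ?thesis .
  qed
  moreover have "2 * t * \<bar>K0\<bar> * \<epsilon> = t * K0\<^sup>2 / 2" by (simp add: \<epsilon>_def power2_eq_square abs_mult_self_eq)
  moreover have "s\<^sup>2 * Qi \<le> t * K0\<^sup>2"
  proof -
    have "s\<^sup>2 * Qi \<le> s\<^sup>2 * \<bar>Qi\<bar>" by (intro mult_left_mono) auto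
    also have "\<dots> = (t * \<bar>Qi\<bar>) * (t * K0\<^sup>2)" by (simp add: s_def power2_eq_square algebra_simps)
    also have "\<dots> \<le> 1 * (t * K0\<^sup>2)" using tQ t0 by (intro mult_right_mono) auto
    finally show ?thesis by simp
  qed
  moreover have "t * K0\<^sup>2 > 0" using t0 K0 by simp
  ultimately have "QF a b f u0 \<eta> < 0" using QFeq I1le \<delta>C by linarith
  then show ?thesis using \<eta>C1 by blast
qed

end

context vsetup begin

lemma norm_ge:
  assumes z: "C1_on a b \<zeta>" and x: "x \<in> {a..b}"
  shows "\<bar>\<zeta> x\<bar> \<le> C1_norm a b \<zeta> \<and> \<bar>dv a b \<zeta> x\<bar> \<le> C1_norm a b \<zeta>"
proof -
  obtain B1 where B1: "\<forall>x\<in>{a..b}. \<bar>\<zeta> x\<bar> \<le> B1" using cont_bound[OF C1_cont[OF z]] by blast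
  obtain B2 where B2: "\<forall>x\<in>{a..b}. \<bar>dv a b \<zeta> x\<bar> \<le> B2" using cont_bound[OF C1_dv_cont[OF z]] by blast
  have bd1: "bdd_above ((\<lambda>x. \<bar>\<zeta> x\<bar>) ` {a..b})" using B1 by (intro bdd_aboveI2) auto
  have bd2: "bdd_above ((\<lambda>x. \<bar>dv a b \<zeta> x\<bar>) ` {a..b})" using B2 by (intro bdd_aboveI2) auto
  have s1: "\<bar>\<zeta> x\<bar> \<le> (SUP x\<in>{a..b}. \<bar>\<zeta> x\<bar>)" by (rule cSUP_upper[OF x bd1])
  have s2: "\<bar>dv a b \<zeta> x\<bar> \<le> (SUP x\<in>{a..b}. \<bar>dv a b \<zeta> x\<bar>)" by (rule cSUP_upper[OF x bd2])
  have p1: "0 \<le> (SUP x\<in>{a..b}. \<bar>\<zeta> x\<bar>)" using s1 by linarith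
  have p2: "0 \<le> (SUP x\<in>{a..b}. \<bar>dv a b \<zeta> x\<bar>)" using s2 by linarith
  show ?thesis unfolding C1_norm_def using s1 s2 p1 p2 by linarith
qed

lemma norm_le:
  assumes "\<forall>x\<in>{a..b}. \<bar>\<zeta> x\<bar> \<le> B1 \<and> \<bar>dv a b \<zeta> x\<bar> \<le> B2"
  shows "C1_norm a b \<zeta> \<le> B1 + B2"
proof -
  have ne: "{a..b} \<noteq> {}" using ab by simp
  have "(SUP x\<in>{a..b}. \<bar>\<zeta> x\<bar>) \<le> B1" by (rule cSUP_least[OF ne]) (use assms in auto)
  moreover have "(SUP x\<in>{a..b}. \<bar>dv a b \<zeta> x\<bar>) \<le> B2" by (rule cSUP_least[OF ne]) (use assms in auto)
  ultimately show ?thesis unfolding C1_norm_def by linarith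
qed

lemma scale_QF_EE:
  assumes "C1_on a b \<eta>"
  shows "QF a b f u0 (\<lambda>x. \<tau> * \<eta> x) = \<tau>\<^sup>2 * QF a b f u0 \<eta>"
    and "EE a b (\<lambda>x. \<tau> * \<eta> x) = \<tau>\<^sup>2 * EE a b \<eta>"
proof -
  have dv: "\<And>x. x \<in> {a..b} \<Longrightarrow> dv a b (\<lambda>x. \<tau> * \<eta> x) x = \<tau> * dv a b \<eta> x"
    using C1_cmul[OF assms] by auto
  have "QF a b f u0 (\<lambda>x. \<tau> * \<eta> x) = integral {a..b} (\<lambda>x. \<tau>\<^sup>2 * qf a b f u0 \<eta> x)"
    unfolding QF_def by (rule integral_cong) (simp add: qf_def dv power2_eq_square algebra_simps)
  then show "QF a b f u0 (\<lambda>x. \<tau> * \<eta> x) = \<tau>\<^sup>2 * QF a b f u0 \<eta>" by (simp add: QF_def)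
  have "EE a b (\<lambda>x. \<tau> * \<eta> x) = integral {a..b} (\<lambda>x. \<tau>\<^sup>2 * ((\<eta> x)\<^sup>2 + (dv a b \<eta> x)\<^sup>2))"
    unfolding EE_def by (rule integral_cong) (simp add: dv power2_eq_square algebra_simps)
  then show "EE a b (\<lambda>x. \<tau> * \<eta> x) = \<tau>\<^sup>2 * EE a b \<eta>" by (simp add: EE_def)
qed

lemma EE_pos:
  assumes z: "C1_on a b \<zeta>" and x0: "x0 \<in> {a..b}" "\<zeta> x0 \<noteq> 0"
  shows "EE a b \<zeta> > 0"
proof -
  have ge: "EE a b \<zeta> \<ge> 0" by (rule EE_nonneg[OF z])
  show ?thesis
  proof (rule ccontr)
    assume "\<not> EE a b \<zeta> > 0"
    then have "EE a b \<zeta> = 0" using ge by simp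
    then have hi: "((\<lambda>x. (\<zeta> x)\<^sup>2 + (dv a b \<zeta> x)\<^sup>2) has_integral 0) (cbox a b)"
      unfolding EE_def using integrable_continuous_interval[OF cont_E[OF z]]
      by (simp add: has_integral_integral)
    have "(\<lambda>x. (\<zeta> x)\<^sup>2 + (dv a b \<zeta> x)\<^sup>2) x0 = 0"
      by (rule has_integral_0_cbox_imp_0[OF _ _ hi]) (use cont_E[OF z] ab x0 in auto)
    then show False using x0 by (simp add: add_nonneg_eq_0_iff)
  qed
qed

end

theorem theorem3p3:
  fixes a b c0 :: real and f :: "real \<Rightarrow> real \<Rightarrow> real \<Rightarrow> real" and u0 h :: "real \<Rightarrow> real"
  assumes ab: "a < b"
    and fC3: "C3_strip a b f"
    and u0C1: "C1_on a b u0"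
    and extremal: "\<forall>x\<in>{a..b}. (along a b (D3 f) u0 has_real_derivative along a b (D2 f) u0 x) (at x within {a..b})"
    and nat_a: "along a b (D3 f) u0 a = 0"
    and nat_b: "along a b (D3 f) u0 b = 0"
    and c0: "c0 > 0" "\<forall>x\<in>{a..b}. along a b (D3 (D3 f)) u0 x \<ge> c0"
    and jac: "jacobi_solution a b f u0 h"
    and nontriv: "\<exists>x\<in>{a..b}. h x \<noteq> 0"
    and Ba: "Bop a b f u0 h a = 0"
  shows "(((\<exists>y\<in>{a<..b}. h y = 0) \<or> Bop a b f u0 h b * h b < 0) \<longrightarrow> \<not> weak_minimizer a b f u0)
       \<and> (((\<forall>y\<in>{a<..b}. h y \<noteq> 0) \<and> Bop a b f u0 h b * h b > 0) \<longrightarrow> strict_weak_minimizer a b f u0)"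
proof -
  obtain U where U: "open U" "{a..b} \<times> UNIV \<times> UNIV \<subseteq> U" "Ck_on 3 U f"
    using fC3 unfolding C3_strip_def by blast
  interpret jsetup a b f u0 U h c0
    by unfold_locales (use ab U u0C1 extremal nat_a nat_b c0 jac Ba in auto)
  show ?thesis
  proof (intro conjI impI)
    assume cond: "(\<exists>y\<in>{a<..b}. h y = 0) \<or> Bop a b f u0 h b * h b < 0"
    obtain \<eta> where \<eta>: "C1_on a b \<eta>" "QF a b f u0 \<eta> < 0" using neg_dir[OF nontriv cond] by blast
    define Qn where "Qn = QF a b f u0 \<eta>"
    define Ee where "Ee = EE a b \<eta>"
    have Qn: "Qn < 0" using \<eta> by (simp add: Qn_def)
    have Ee: "Ee \<ge> 0" using EE_nonneg[OF \<eta>(1)] by (simp add: Ee_def)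
    define \<epsilon>' where "\<epsilon>' = - Qn / (4 * (Ee + 1))"
    have \<epsilon>'0: "\<epsilon>' > 0" using Qn Ee by (simp add: \<epsilon>'_def divide_neg_pos)
    have \<epsilon>'E: "\<epsilon>' * Ee \<le> - Qn / 4"
    proof -
      have "\<epsilon>' * Ee = (- Qn / 4) * (Ee / (Ee + 1))" using Ee by (simp add: \<epsilon>'_def field_simps)
      also have "\<dots> \<le> (- Qn / 4) * 1" using Qn Ee by (intro mult_left_mono) auto
      finally show ?thesis by simp
    qed
    obtain \<delta> where \<delta>: "\<delta> > 0" "\<forall>\<eta>. C1_on a b \<eta> \<and> (\<forall>x\<in>{a..b}. \<bar>\<eta> x\<bar> \<le> \<delta> \<and> \<bar>dv a b \<eta> x\<bar> \<le> \<delta>) \<longrightarrow>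
        \<bar>Phi a b f (\<lambda>x. u0 x + \<eta> x) - Phi a b f u0 - QF a b f u0 \<eta> / 2\<bar> \<le> \<epsilon>' * EE a b \<eta>"
      using taylor_est[OF \<epsilon>'0] by blast
    show "\<not> weak_minimizer a b f u0"
    proof
      assume "weak_minimizer a b f u0"
      then obtain \<epsilon> where \<epsilon>: "\<epsilon> > 0" "\<forall>v. C1_on a b v \<and> C1_norm a b (\<lambda>x. v x - u0 x) < \<epsilon> \<longrightarrow> Phi a b f v \<ge> Phi a b f u0"
        unfolding weak_minimizer_def by blast
      obtain N1 where N1: "\<forall>x\<in>{a..b}. \<bar>\<eta> x\<bar> \<le> N1" using cont_bound[OF C1_cont[OF \<eta>(1)]] by blast
      obtain N2 where N2: "\<forall>x\<in>{a..b}. \<bar>dv a b \<eta> x\<bar> \<le> N2" using cont_bound[OF C1_dv_cont[OF \<eta>(1)]] by blast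
      define N where "N = max N1 N2 + 1"
      have N0: "N > 0" using N1 ab by (simp add: N_def) (smt (verit) abs_ge_zero atLeastAtMost_iff less_imp_le)
      have Nb: "\<And>x. x \<in> {a..b} \<Longrightarrow> \<bar>\<eta> x\<bar> \<le> N \<and> \<bar>dv a b \<eta> x\<bar> \<le> N"
        using N1 N2 by (force simp: N_def le_max_iff_disj)
      define \<tau> where "\<tau> = min (\<delta> / N) (\<epsilon> / (3 * N))"
      have \<tau>0: "\<tau> > 0" using \<delta> \<epsilon> N0 by (simp add: \<tau>_def)
      have \<tau>N: "\<tau> * N \<le> \<delta>" "\<tau> * N \<le> \<epsilon> / 3"
      proof -
        have "\<tau> * N \<le> (\<delta> / N) * N" using N0 by (intro mult_right_mono) (auto simp: \<tau>_def)
        then show "\<tau> * N \<le> \<delta>" using N0 by simp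
        have "\<tau> * N \<le> (\<epsilon> / (3 * N)) * N" using N0 by (intro mult_right_mono) (auto simp: \<tau>_def)
        then show "\<tau> * N \<le> \<epsilon> / 3" using N0 by simp
      qed
      define \<zeta> where "\<zeta> x = \<tau> * \<eta> x" for x
      have \<zeta>C: "C1_on a b \<zeta>" and dv\<zeta>: "\<And>x. x \<in> {a..b} \<Longrightarrow> dv a b \<zeta> x = \<tau> * dv a b \<eta> x"
        using C1_cmul[OF \<eta>(1), of \<tau>] by (auto simp: \<zeta>_def[abs_def])
      have \<zeta>b: "\<bar>\<zeta> x\<bar> \<le> \<tau> * N \<and> \<bar>dv a b \<zeta> x\<bar> \<le> \<tau> * N" if x: "x \<in> {a..b}" for x
        using Nb[OF x] \<tau>0 by (simp add: \<zeta>_def dv\<zeta>[OF x] abs_mult mult_left_mono)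
      define v where "v x = u0 x + \<zeta> x" for x
      have vC: "C1_on a b v" using C1_add[OF u0C1 \<zeta>C] by (simp add: v_def[abs_def])
      have "C1_norm a b (\<lambda>x. v x - u0 x) = C1_norm a b \<zeta>" by (simp add: v_def)
      also have "\<dots> \<le> \<tau> * N + \<tau> * N" by (rule norm_le) (use \<zeta>b in auto)
      also have "\<dots> < \<epsilon>" using \<tau>N \<epsilon> by linarith
      finally have "Phi a b f v \<ge> Phi a b f u0" using \<epsilon>(2) vC by blast
      moreover have "\<bar>Phi a b f (\<lambda>x. u0 x + \<zeta> x) - Phi a b f u0 - QF a b f u0 \<zeta> / 2\<bar> \<le> \<epsilon>' * EE a b \<zeta>"
        using \<delta>(2) \<zeta>C \<zeta>b \<tau>N by (meson order_trans)
      moreover have "QF a b f u0 \<zeta> = \<tau>\<^sup>2 * Qn" "EE a b \<zeta> = \<tau>\<^sup>2 * Ee"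
        using scale_QF_EE[OF \<eta>(1), of \<tau>] by (auto simp: \<zeta>_def[abs_def] Qn_def Ee_def)
      moreover have "(\<lambda>x. u0 x + \<zeta> x) = v" by (simp add: v_def[abs_def])
      ultimately have "0 \<le> \<tau>\<^sup>2 * Qn / 2 + \<epsilon>' * (\<tau>\<^sup>2 * Ee)" by auto
      also have "\<dots> = \<tau>\<^sup>2 * (Qn / 2 + \<epsilon>' * Ee)" by (simp add: algebra_simps)
      also have "\<dots> \<le> \<tau>\<^sup>2 * (Qn / 4)" using \<epsilon>'E by (intro mult_left_mono) auto
      also have "\<dots> < 0" using \<tau>0 Qn by (simp add: mult_pos_neg)
      finally show False by simp
    qed
  next
    assume cond: "(\<forall>y\<in>{a<..b}. h y \<noteq> 0) \<and> Bop a b f u0 h b * h b > 0"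
    have ha: "h a \<noteq> 0"
    proof
      assume "h a = 0"
      then have "\<forall>x\<in>{a..b}. h x = 0" using uniq[of a] Ba ab by auto
      then show False using nontriv by blast
    qed
    have hnz: "\<forall>x\<in>{a..b}. h x \<noteq> 0"
    proof
      fix x assume x: "x \<in> {a..b}"
      show "h x \<noteq> 0" using cond ha x by (cases "x = a") auto
    qed
    obtain \<kappa> where \<kappa>: "\<kappa> > 0" "\<forall>\<eta>. C1_on a b \<eta> \<longrightarrow> QF a b f u0 \<eta> \<ge> \<kappa> * EE a b \<eta>"
      using coercive[OF hnz] cond by blast
    have k4: "\<kappa> / 4 > 0" using \<kappa> by simp
    obtain \<delta> where \<delta>: "\<delta> > 0" "\<forall>\<eta>. C1_on a b \<eta> \<and> (\<forall>x\<in>{a..b}. \<bar>\<eta> x\<bar> \<le> \<delta> \<and> \<bar>dv a b \<eta> x\<bar> \<le> \<delta>) \<longrightarrow>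
        \<bar>Phi a b f (\<lambda>x. u0 x + \<eta> x) - Phi a b f u0 - QF a b f u0 \<eta> / 2\<bar> \<le> \<kappa> / 4 * EE a b \<eta>"
      using taylor_est[OF k4] by blast
    show "strict_weak_minimizer a b f u0"
      unfolding strict_weak_minimizer_def
    proof (intro exI[of _ \<delta>] conjI allI impI)
      show "\<delta> > 0" by (rule \<delta>(1))
      fix v assume H: "C1_on a b v \<and> C1_norm a b (\<lambda>x. v x - u0 x) < \<delta> \<and> (\<exists>x\<in>{a..b}. v x \<noteq> u0 x)"
      define \<zeta> where "\<zeta> x = v x - u0 x" for x
      have \<zeta>C: "C1_on a b \<zeta>" using C1_diff[of v u0] H u0C1 by (simp add: \<zeta>_def[abs_def])
      have nrm: "C1_norm a b \<zeta> < \<delta>" using H by (simp add: \<zeta>_def[abs_def])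
      have small: "\<forall>x\<in>{a..b}. \<bar>\<zeta> x\<bar> \<le> \<delta> \<and> \<bar>dv a b \<zeta> x\<bar> \<le> \<delta>"
        using norm_ge[OF \<zeta>C] nrm by fastforce
      obtain x0 where x0: "x0 \<in> {a..b}" "\<zeta> x0 \<noteq> 0" using H by (auto simp: \<zeta>_def)
      have vv: "(\<lambda>x. u0 x + \<zeta> x) = v" by (simp add: \<zeta>_def[abs_def])
      have T: "\<bar>Phi a b f v - Phi a b f u0 - QF a b f u0 \<zeta> / 2\<bar> \<le> \<kappa> / 4 * EE a b \<zeta>"
        using \<delta>(2) \<zeta>C small vv by metis
      have Q: "QF a b f u0 \<zeta> \<ge> \<kappa> * EE a b \<zeta>" using \<kappa>(2) \<zeta>C by blast
      have E: "EE a b \<zeta> > 0" by (rule EE_pos[OF \<zeta>C x0])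
      have "Phi a b f v - Phi a b f u0 \<ge> \<kappa> / 4 * EE a b \<zeta>" using T Q by linarith
      moreover have "\<kappa> / 4 * EE a b \<zeta> > 0" using \<kappa> E by simp
      ultimately show "Phi a b f v > Phi a b f u0" by linarith
    qed
  qed
qed


end
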